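(* Let $f\colon\mathbb{N}\to\mathbb{C}$ be any arithmetic function satisfying \[ \limsup_{r\to\infty} \frac{\|f|_{2^{r+1}}\|_2}{\|f|_{2^r}\|_2}<\infty . \] Then there is a set $\mathcal{G}\subseteq(1,\infty)$ (depending on $f$) whose complement in $(1,\infty)$ has Lebesgue measure zero, such that for every $\alpha\in\mathcal{G}$ and every $\varepsilon>0$ there is $C=C(f,\alpha,\varepsilon)>0$ with \[ \Big| S_\alpha(f,x)-\alpha^{-1}S(f,x)\Big| \le C\, x^{1/2+\varepsilon} M(f,x)\qquad\text{for all real } x\ge 8 . \]
   Context: $\mathbb{N}=\{1,2,3,\dots\}$, $\lfloor \xi\rfloor$ is the integer part of $\xi$, and $\mathcal{B}(\alpha)=\{\lfloor n\alpha\rfloor : n\in\mathbb{N}\}$ for real $\alpha\ge1$. For $x\ge1$: $M(f,x)=1+\max_{1\le m\le x}|f(m)|$, $S_\alpha(f,x)=\sum_{1\le m\le x,\ m\in\mathcal{B}(\alpha)} f(m)$, $S(f,x)=\sum_{1\le m\le x} f(m)$, and $\|f|_x\|_2=\big(\sum_{1\le m\le x}|f(m)|^2\big)^{1/2}$. *)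

theory Defs
  imports "HOL-Analysis.Analysis"
begin

definition beatty :: "real \<Rightarrow> nat set" where
  "beatty \<alpha> = {nat \<lfloor>real n * \<alpha>\<rfloor> | n. n \<ge> 1}"

definition Mf :: "(nat \<Rightarrow> complex) \<Rightarrow> real \<Rightarrow> real" where
  "Mf f x = 1 + Max ((\<lambda>m. cmod (f m)) ` {1..nat \<lfloor>x\<rfloor>})"

definition S_beatty :: "real \<Rightarrow> (nat \<Rightarrow> complex) \<Rightarrow> real \<Rightarrow> complex" where
  "S_beatty \<alpha> f x = (\<Sum>m \<in> {1..nat \<lfloor>x\<rfloor>} \<inter> beatty \<alpha>. f m)"

definition S_full :: "(nat \<Rightarrow> complex) \<Rightarrow> real \<Rightarrow> complex" where
  "S_full f x = (\<Sum>m \<in> {1..nat \<lfloor>x\<rfloor>}. f m)"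

definition norm2_upto :: "(nat \<Rightarrow> complex) \<Rightarrow> real \<Rightarrow> real" where
  "norm2_upto f x = sqrt (\<Sum>m \<in> {1..nat \<lfloor>x\<rfloor>}. (cmod (f m))\<^sup>2)"

end

theory Submission
  imports Defs
begin


lemma bdd_integrable:
  fixes f :: "real \<Rightarrow> real"
  assumes "f \<in> borel_measurable borel" "\<And>x. x \<in> {a..b} \<Longrightarrow> \<bar>f x\<bar> \<le> B"
  shows "f integrable_on {a..b}"
proof -
  have "integrable (lebesgue_on {a..b}) f"
  proof (rule finite_measure.integrable_const_bound[where B=B])
    show "finite_measure (lebesgue_on {a..b})"
      by (rule finite_measure_lebesgue_on) (metis cbox_interval lmeasurable_cbox)
    show "AE x in lebesgue_on {a..b}. norm (f x) \<le> B"
      using assms(2) by (auto simp: AE_restrict_space_iff)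
    show "f \<in> borel_measurable (lebesgue_on {a..b})"
      using assms(1) by (intro measurable_restrict_space1 measurable_completion) simp
  qed
  then show ?thesis by (rule integrable_on_lebesgue_on) auto
qed

lemma piece_integral:
  fixes \<phi> :: "real \<Rightarrow> real"
  assumes int: "\<phi> integrable_on {real j / k .. (real j + 1)/k}" and k: "k > 0"
  shows "integral {real j / k .. (real j + 1)/k} \<phi> = integral {0..1} (\<lambda>t. \<phi> ((real j + t)/k)) / k"
proof -
  have h: "(\<phi> has_integral integral {real j / k .. (real j + 1)/k} \<phi>) (cbox (real j / k) ((real j + 1)/k))"
    using int by (simp add: integrable_integral)
  have "((\<lambda>x. \<phi> ((1/k) *\<^sub>R x + real j / k)) has_integral (integral {real j / k .. (real j + 1)/k} \<phi> /\<^sub>R (1/k) ^ DIM(real)))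
     (cbox ((real j / k - real j / k) /\<^sub>R (1/k)) (((real j + 1)/k - real j / k) /\<^sub>R (1/k)))"
    by (rule has_integral_affinity'[OF h]) (use k in auto)
  moreover have "cbox ((real j / k - real j / k) /\<^sub>R (1/k)) (((real j + 1)/k - real j / k) /\<^sub>R (1/k)) = {0..1}"
    using k by (simp add: field_simps)
  moreover have "(\<lambda>x. \<phi> ((1/k) *\<^sub>R x + real j / k)) = (\<lambda>t. \<phi> ((real j + t)/k))"
    using k by (auto simp: field_simps)
  ultimately have "((\<lambda>t. \<phi> ((real j + t)/k)) has_integral (integral {real j / k .. (real j + 1)/k} \<phi> * k)) {0..1}"
    by (simp add: mult.commute)
  then show ?thesis using k by (simp add: integral_unique field_simps)
qed

lemma integral_split_pieces:
  fixes \<phi> :: "real \<Rightarrow> real"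
  assumes int: "\<phi> integrable_on {0..1}" and k: "k > 0"
  shows "integral {0..1} \<phi> = (\<Sum>j<k. integral {0..1} (\<lambda>t. \<phi> ((real j + t)/k)) / k)"
proof -
  have kr: "real k > 0" using k by simp
  have "n \<le> k \<Longrightarrow> integral {0..real n / k} \<phi> = (\<Sum>j<n. integral {0..1} (\<lambda>t. \<phi> ((real j + t)/k)) / k)" for n
  proof (induction n)
    case 0 then show ?case by simp
  next
    case (Suc n)
    have sub: "{0..real (Suc n)/k} \<subseteq> {0..1}" using Suc.prems kr by (auto simp: field_simps)
    have i1: "\<phi> integrable_on {0..real (Suc n)/k}" by (rule integrable_subinterval_real[OF int sub])
    have "integral {0..real n / k} \<phi> + integral {real n / k..real (Suc n)/k} \<phi> = integral {0..real (Suc n)/k} \<phi>"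
      by (rule Henstock_Kurzweil_Integration.integral_combine[OF _ _ i1]) (use kr in \<open>auto simp: divide_right_mono\<close>)
    moreover have "integral {real n / k..real (Suc n)/k} \<phi> = integral {0..1} (\<lambda>t. \<phi> ((real n + t)/k)) / k"
    proof -
      have "{real n / k..(real n + 1)/k} \<subseteq> {0..1}" using sub kr by (auto simp: field_simps)
      then have "\<phi> integrable_on {real n / k..(real n + 1)/k}" using int integrable_subinterval_real by blast
      from piece_integral[OF this kr] show ?thesis by (simp add: add.commute)
    qed
    ultimately show ?case using Suc by simp
  qed
  from this[of k] show ?thesis using kr by simp
qed

lemma meas_scale:
  fixes \<phi> :: "real \<Rightarrow> real"
  assumes "\<phi> \<in> borel_measurable borel"
  shows "(\<lambda>u. \<phi> (c * u + d)) \<in> borel_measurable borel"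
  using assms by (rule measurable_compose[rotated]) simp

lemma integral_periodic_scale:
  fixes \<phi> :: "real \<Rightarrow> real"
  assumes per: "\<And>x. \<phi> (x + 1) = \<phi> x" and meas: "\<phi> \<in> borel_measurable borel"
    and bd: "\<And>x. \<bar>\<phi> x\<bar> \<le> B" and k: "k > 0"
  shows "integral {0..1} (\<lambda>u. \<phi> (real k * u)) = integral {0..1} \<phi>"
proof -
  have pj: "\<phi> (real j + t) = \<phi> t" for j t
  proof (induction j)
    case (Suc j)
    have "\<phi> (real (Suc j) + t) = \<phi> ((real j + t) + 1)" by (simp add: algebra_simps)
    then show ?case using per Suc by simp
  qed simp
  have m2: "(\<lambda>u. \<phi> (real k * u)) \<in> borel_measurable borel"
    using meas_scale[OF meas, of "real k" 0] by simp
  have int: "(\<lambda>u. \<phi> (real k * u)) integrable_on {0..1}"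
    by (rule bdd_integrable[OF m2]) (use bd in auto)
  have "integral {0..1} (\<lambda>u. \<phi> (real k * u)) = (\<Sum>j<k. integral {0..1} (\<lambda>t. \<phi> (real k * ((real j + t)/k))) / k)"
    by (rule integral_split_pieces[OF int k])
  also have "\<dots> = (\<Sum>j<k. integral {0..1} \<phi> / k)"
    using k pj by (intro sum.cong refl) simp
  also have "\<dots> = integral {0..1} \<phi>" using k by simp
  finally show ?thesis .
qed

lemma has_int_id01: "((\<lambda>t::real. t) has_integral 1/2) {0..1}"
proof -
  have "((\<lambda>t::real. t) has_integral ((\<lambda>t. t^2/2) 1 - (\<lambda>t. t^2/2) 0)) {0..1}"
    by (rule fundamental_theorem_of_calculus)
       (auto intro!: derivative_eq_intros simp: has_real_derivative_iff_has_vector_derivative[symmetric])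
  then show ?thesis by simp
qed

lemma has_int_sq01: "((\<lambda>t::real. t^2) has_integral 1/3) {0..1}"
proof -
  have "((\<lambda>t::real. t^2) has_integral ((\<lambda>t. t^3/3) 1 - (\<lambda>t. t^3/3) 0)) {0..1}"
    by (rule fundamental_theorem_of_calculus)
       (auto intro!: derivative_eq_intros simp: has_real_derivative_iff_has_vector_derivative[symmetric] power2_eq_square)
  then show ?thesis by simp
qed

lemma frac_nat_add: "frac (real j + t) = frac t"
  by (simp add: frac_def)

lemma frac_int_add: "frac (real_of_int j + t) = frac t"
  by (simp add: frac_def)

lemma meas_frac: "(\<lambda>u::real. frac (c * u + d)) \<in> borel_measurable borel"
  unfolding frac_def by measurable

lemma integral_frac01: "integral {0..1} (\<lambda>u::real. frac u) = 1/2"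
proof -
  have "integral {0..1} (\<lambda>u::real. frac u) = integral {0..1} (\<lambda>u. u)"
    by (rule integral_spike[of "{1}"]) (auto simp: frac_eq)
  then show ?thesis using has_int_id01 by (simp add: integral_unique)
qed

lemma integral_frac_scale: "k > 0 \<Longrightarrow> integral {0..1} (\<lambda>u. frac (real k * u)) = 1/2"
proof -
  assume k: "k > 0"
  have m: "(frac :: real \<Rightarrow> real) \<in> borel_measurable borel" using meas_frac[of 1 0] by simp
  have b: "\<bar>frac x\<bar> \<le> 1" for x :: real using frac_lt_1[of x] frac_ge_0[of x] by simp
  have p: "frac (x + 1) = frac x" for x :: real using frac_int_add[of 1 x] by (simp add: add.commute)
  show ?thesis using integral_periodic_scale[of frac, OF p m b k] integral_frac01 by simp
qed

lemma sum_real_lessThan: "(\<Sum>r<a. real r) = real a * (real a - 1) / 2"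
  by (induction a) (auto simp: field_simps)

lemma hermite_nat: "(a::nat) > 0 \<Longrightarrow> (\<Sum>r<a. (n + r) div a) = n"
proof (induction n)
  case 0 then show ?case by simp
next
  case (Suc n)
  have "(\<Sum>r<a. (Suc n + r) div a) = (\<Sum>r<a. (n + Suc r) div a)" by simp
  also have "\<dots> = (\<Sum>r<Suc a. (n + r) div a) - (n + 0) div a"
    by (subst sum.lessThan_Suc_shift) simp
  also have "\<dots> = (\<Sum>r<a. (n + r) div a) + (n + a) div a - n div a" by simp
  also have "\<dots> = Suc n" using Suc by simp
  finally show ?case .
qed

lemma hermite_frac:
  assumes a: "(a::nat) > 0" and y: "y \<ge> 0"
  shows "(\<Sum>r<a. frac ((real r + y)/a)) = frac y + (real a - 1)/2"
proof -
  define n where "n = nat \<lfloor>y\<rfloor>"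
  have yn: "\<lfloor>y\<rfloor> = int n" using y by (simp add: n_def)
  have fl: "\<lfloor>(real r + y)/a\<rfloor> = int ((n + r) div a)" for r
  proof -
    have "\<lfloor>(real r + y)/ real_of_int (int a)\<rfloor> = \<lfloor>real r + y\<rfloor> div int a"
      by (rule floor_divide_real_eq_div) simp
    also have "\<lfloor>real r + y\<rfloor> = int r + int n" using yn by simp
    finally show ?thesis by (simp add: zdiv_int add.commute)
  qed
  have "(\<Sum>r<a. frac ((real r + y)/a)) = (\<Sum>r<a. (real r + y)/a) - (\<Sum>r<a. real ((n + r) div a))"
    by (simp add: frac_def fl sum_subtractf)
  also have "(\<Sum>r<a. real ((n + r) div a)) = real n"
    using hermite_nat[OF a, of n] by (metis of_nat_sum)
  also have "(\<Sum>r<a. (real r + y)/a) = ((\<Sum>r<a. real r) + a * y) / a"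
    by (simp add: sum_divide_distrib[symmetric] sum.distrib)
  also have "\<dots> = (real a - 1)/2 + y"
    using a by (simp add: sum_real_lessThan field_simps)
  finally show ?thesis using yn by (simp add: frac_def)
qed

lemma frac_bounds: "\<bar>frac (x::real)\<bar> \<le> 1" "frac x \<ge> 0" "frac x < 1"
  using frac_lt_1[of x] frac_ge_0[of x] by auto

lemma int_frac_prod: "(\<lambda>u::real. frac (a * u) * frac (b * u)) integrable_on {0..1}"
proof (rule bdd_integrable[where B=1])
  show "(\<lambda>u::real. frac (a * u) * frac (b * u)) \<in> borel_measurable borel" unfolding frac_def by measurable
  show "\<bar>frac (a * x) * frac (b * x)\<bar> \<le> 1" for x
    using frac_bounds[of "a*x"] frac_bounds[of "b*x"] by (simp add: abs_mult mult_le_one)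
qed

lemma int_frac: "(\<lambda>u::real. frac (a * u)) integrable_on {0..1}"
  by (rule bdd_integrable[where B=1]) (auto simp: meas_frac[of a 0, simplified] intro: less_imp_le[OF frac_lt_1])

lemma int_t_frac: "(\<lambda>t::real. t * frac (a * t)) integrable_on {0..1}"
proof (rule bdd_integrable[where B=1])
  show "(\<lambda>u::real. u * frac (a * u)) \<in> borel_measurable borel" unfolding frac_def by measurable
  show "x \<in> {0..1} \<Longrightarrow> \<bar>x * frac (a * x)\<bar> \<le> 1" for x
    using frac_bounds[of "a*x"] by (simp add: abs_mult mult_le_one)
qed

lemma J_val:
  assumes b: "b > 0"
  shows "integral {0..1} (\<lambda>t. t * frac (real b * t)) = 1/4 + 1/(12 * real b)"
proof -
  have br: "real b > 0" using b by simp
  have "integral {0..1} (\<lambda>t. t * frac (real b * t)) =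
        (\<Sum>j<b. integral {0..1} (\<lambda>t. ((real j + t)/b) * frac (real b * ((real j + t)/b))) / b)"
    by (rule integral_split_pieces[OF int_t_frac b])
  also have "\<dots> = (\<Sum>j<b. (real j / (2 * b) + 1 / (3 * b)) / b)"
  proof (intro sum.cong refl)
    fix j assume "j \<in> {..<b}"
    have "integral {0..1} (\<lambda>t. ((real j + t)/b) * frac (real b * ((real j + t)/b)))
        = integral {0..1} (\<lambda>t. (real j / b) * t + (1/b) * t^2)"
    proof (rule integral_spike[of "{1}"])
      fix t :: real assume t: "t \<in> {0..1} - {1}"
      have "real b * ((real j + t)/b) = real j + t" using br by simp
      then have "frac (real b * ((real j + t)/b)) = t" using t by (simp add: frac_nat_add frac_eq)
      then show "(real j / b) * t + (1/b) * t^2 = ((real j + t)/b) * frac (real b * ((real j + t)/b))"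
        using br by (simp add: power2_eq_square add_divide_distrib algebra_simps)
    qed simp
    also have "\<dots> = real j / (2 * b) + 1 / (3 * b)"
    proof -
      have "((\<lambda>t. (real j / b) * t + (1/b) * t^2) has_integral ((real j / b) * (1/2) + (1/b) * (1/3))) {0..1}"
        by (intro has_integral_add has_integral_mult_right has_int_id01 has_int_sq01)
      then show ?thesis by (simp add: integral_unique)
    qed
    finally show "integral {0..1} (\<lambda>t. ((real j + t)/b) * frac (real b * ((real j + t)/b))) / b
        = (real j / (2 * b) + 1 / (3 * b)) / b" by simp
  qed
  also have "\<dots> = ((\<Sum>j<b. real j) / (2*b) + b / (3*b)) / b"
    by (simp add: sum_divide_distrib[symmetric] sum.distrib)
  also have "\<dots> = 1/4 + 1/(12 * real b)"
    using br by (simp add: sum_real_lessThan field_simps)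
  finally show ?thesis .
qed

lemma reindex_mod:
  fixes a b :: nat
  assumes cop: "coprime a b" and a: "a > 0"
  shows "(\<Sum>j<a. h ((b*j) mod a)) = (\<Sum>r<a. h r)"
proof -
  have inj: "inj_on (\<lambda>j. (b*j) mod a) {..<a}"
  proof (rule inj_onI)
    fix x y assume xy: "x \<in> {..<a}" "y \<in> {..<a}" "(b*x) mod a = (b*y) mod a"
    have key: "x \<le> y \<Longrightarrow> (b*x) mod a = (b*y) mod a \<Longrightarrow> x = y" if "x < a" "y < a" for x y
    proof -
      assume le: "x \<le> y" and e: "(b*x) mod a = (b*y) mod a"
      have "b*x \<le> b*y" using le by simp
      then have "a dvd b*y - b*x" using e mod_eq_dvd_iff_nat[of "b*x" "b*y" a] by simp
      then have "a dvd b*(y - x)" by (simp add: diff_mult_distrib2)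
      then have "a dvd (y - x)" using cop by (simp add: coprime_dvd_mult_right_iff)
      moreover have "y - x < a" using that by simp
      ultimately have "y - x = 0" by (cases "y - x = 0") (auto dest: dvd_imp_le)
      then show "x = y" using le by simp
    qed
    have xa: "x < a" "y < a" using xy(1,2) by auto
    show "x = y"
    proof (cases "x \<le> y")
      case True then show ?thesis using key[OF xa True xy(3)] by simp
    next
      case False then have "y \<le> x" by simp
      then show ?thesis using key[OF xa(2,1) _ xy(3)[symmetric]] by simp
    qed
  qed
  have img: "(\<lambda>j. (b*j) mod a) ` {..<a} = {..<a}"
    by (rule endo_inj_surj[OF _ _ inj]) (use a in \<open>auto intro: mod_less_divisor\<close>)
  have "(\<Sum>r<a. h r) = (\<Sum>r\<in>(\<lambda>j. (b*j) mod a) ` {..<a}. h r)" by (simp add: img)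
  also have "\<dots> = (\<Sum>j<a. h ((b*j) mod a))" by (simp add: sum.reindex[OF inj])
  finally show ?thesis by simp
qed

lemma I_coprime:
  assumes a: "a > 0" and b: "b > 0" and cop: "coprime a b"
  shows "integral {0..1} (\<lambda>u. frac (real a * u) * frac (real b * u)) = 1/4 + 1/(12 * real a * real b)"
proof -
  have ar: "real a > 0" and br: "real b > 0" using a b by auto
  let ?g = "\<lambda>j t. t * frac ((real ((b*j) mod a) + real b * t)/a)"
  have gint: "?g j integrable_on {0..1}" for j
  proof (rule bdd_integrable[where B=1])
    show "?g j \<in> borel_measurable borel" unfolding frac_def by measurable
    show "x \<in> {0..1} \<Longrightarrow> \<bar>?g j x\<bar> \<le> 1" for x
      using frac_bounds[of "(real ((b*j) mod a) + real b * x)/a"] by (simp add: abs_mult mult_le_one)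
  qed
  have "integral {0..1} (\<lambda>u. frac (real a * u) * frac (real b * u)) =
        (\<Sum>j<a. integral {0..1} (\<lambda>t. frac (real a * ((real j + t)/a)) * frac (real b * ((real j + t)/a))) / a)"
    by (rule integral_split_pieces[OF int_frac_prod a])
  also have "\<dots> = (\<Sum>j<a. integral {0..1} (?g j) / a)"
  proof (intro sum.cong refl arg_cong2[where f="(/)"])
    fix j
    have e: "real b * ((real j + t)/a) = real (b*j div a) + (real ((b*j) mod a) + real b * t)/a" for t
    proof -
      have "real (b*j) = real a * real (b*j div a) + real ((b*j) mod a)"
        by (metis div_mult_mod_eq of_nat_add of_nat_mult mult.commute)
      then show ?thesis using ar by (simp add: field_simps)
    qed
    show "integral {0..1} (\<lambda>t. frac (real a * ((real j + t)/a)) * frac (real b * ((real j + t)/a))) = integral {0..1} (?g j)"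
    proof (rule integral_spike[of "{1}"])
      fix t :: real assume t: "t \<in> {0..1} - {1}"
      have "real a * ((real j + t)/a) = real j + t" using ar by simp
      then have "frac (real a * ((real j + t)/a)) = t" using t by (simp add: frac_nat_add frac_eq)
      moreover have "frac (real b * ((real j + t)/a)) = frac ((real ((b*j) mod a) + real b * t)/a)"
        by (simp only: e frac_nat_add)
      ultimately show "?g j t = frac (real a * ((real j + t)/a)) * frac (real b * ((real j + t)/a))"
        by simp
    qed simp
  qed
  also have "\<dots> = integral {0..1} (\<lambda>t. \<Sum>j<a. ?g j t) / a"
    by (simp add: integral_sum[OF _ gint] sum_divide_distrib)
  also have "integral {0..1} (\<lambda>t. \<Sum>j<a. ?g j t) = integral {0..1} (\<lambda>t. t * frac (real b * t) + ((real a - 1)/2) * t)"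
  proof (rule integral_cong)
    fix t :: real assume t: "t \<in> {0..1}"
    have "(\<Sum>j<a. ?g j t) = t * (\<Sum>j<a. frac ((real ((b*j) mod a) + real b * t)/a))"
      by (simp add: sum_distrib_left)
    also have "(\<Sum>j<a. frac ((real ((b*j) mod a) + real b * t)/a)) = (\<Sum>r<a. frac ((real r + real b * t)/a))"
      by (rule reindex_mod[OF cop a])
    also have "\<dots> = frac (real b * t) + (real a - 1)/2"
      by (rule hermite_frac[OF a]) (use t in auto)
    finally show "(\<Sum>j<a. ?g j t) = t * frac (real b * t) + ((real a - 1)/2) * t" by (simp add: algebra_simps)
  qed
  also have "\<dots> = integral {0..1} (\<lambda>t. t * frac (real b * t)) + ((real a - 1)/2) * (1/2)"
  proof -
    have "((\<lambda>t. t * frac (real b * t) + ((real a - 1)/2) * t) has_integral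
           (integral {0..1} (\<lambda>t. t * frac (real b * t)) + ((real a - 1)/2) * (1/2))) {0..1}"
      by (intro has_integral_add has_integral_mult_right has_int_id01 integrable_integral int_t_frac)
    then show ?thesis by (simp add: integral_unique)
  qed
  also have "\<dots> = 1/4 + 1/(12 * real b) + (real a - 1)/4" using J_val[OF b] by simp
  finally show ?thesis using ar br by (simp add: field_simps)
qed

lemma I_gen:
  assumes a: "a > 0" and b: "b > 0"
  shows "integral {0..1} (\<lambda>u. frac (real a * u) * frac (real b * u)) = 1/4 + real (gcd a b)^2/(12 * real a * real b)"
proof -
  define d where "d = gcd a b"
  define a' where "a' = a div d"
  define b' where "b' = b div d"
  have d: "d > 0" using a by (simp add: d_def)
  have cop: "coprime a' b'" unfolding a'_def b'_def d_def by (rule div_gcd_coprime) (use a in auto)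
  have aa: "a = d * a'" unfolding a'_def d_def by simp
  have bb: "b = d * b'" unfolding b'_def d_def by simp
  have a': "a' > 0" and b': "b' > 0" using aa bb a b by auto
  define \<phi> where "\<phi> = (\<lambda>v. frac (real a' * v) * frac (real b' * v))"
  have per: "\<phi> (x + 1) = \<phi> x" for x
    unfolding \<phi>_def by (simp add: distrib_left frac_nat_add add.commute[of _ "real a'"] add.commute[of _ "real b'"])
  have m: "\<phi> \<in> borel_measurable borel" unfolding \<phi>_def frac_def by measurable
  have bd: "\<bar>\<phi> x\<bar> \<le> 1" for x
    unfolding \<phi>_def using frac_bounds[of "a'*x"] frac_bounds[of "b'*x"] by (simp add: abs_mult mult_le_one)
  have "integral {0..1} (\<lambda>u. frac (real a * u) * frac (real b * u)) = integral {0..1} (\<lambda>u. \<phi> (real d * u))"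
    unfolding \<phi>_def aa bb by (simp add: mult.assoc mult.left_commute)
  also have "\<dots> = integral {0..1} \<phi>" by (rule integral_periodic_scale[OF per m bd d])
  also have "\<dots> = 1/4 + 1/(12 * real a' * real b')" unfolding \<phi>_def by (rule I_coprime[OF a' b' cop])
  also have "\<dots> = 1/4 + real d^2/(12 * real a * real b)"
    using d a' b' by (simp add: aa bb field_simps power2_eq_square)
  finally show ?thesis by (simp add: d_def)
qed

lemma integral_reflect01:
  fixes \<phi> :: "real \<Rightarrow> real"
  assumes m: "\<phi> \<in> borel_measurable borel" and bd: "\<And>x. \<bar>\<phi> x\<bar> \<le> B"
  shows "integral {0..1} (\<lambda>u. \<phi> (1 - u)) = integral {0..1} \<phi>"
proof -
  define \<psi> where "\<psi> = (\<lambda>x. \<phi> (-x))"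
  have mp: "\<psi> \<in> borel_measurable borel" unfolding \<psi>_def using meas_scale[OF m, of "-1" 0] by simp
  have i: "\<psi> integrable_on {-1..0}" by (rule bdd_integrable[OF mp, where B=B]) (simp add: \<psi>_def bd)
  have "(\<psi> has_integral integral {-1..0} \<psi>) (cbox (-1) 0)" using i by (simp add: integrable_integral)
  from has_integral_affinity'[OF this, of 1 "-1"]
  have "((\<lambda>x. \<psi> (x - 1)) has_integral integral {-1..0} \<psi>) {0..1}" by simp
  then have "integral {0..1} (\<lambda>u. \<phi> (1 - u)) = integral {-1..0} \<psi>"
    by (simp add: integral_unique \<psi>_def)
  also have "\<dots> = integral {0..1} \<phi>"
    using Henstock_Kurzweil_Integration.integral_reflect_real[of 1 0 \<phi>] by (simp add: \<psi>_def)
  finally show ?thesis .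
qed

definition Gf :: "nat \<Rightarrow> real \<Rightarrow> real" where
  "Gf k \<beta> = frac (- (real k * \<beta>)) - 1/2"

lemma Gf_meas[measurable]: "Gf k \<in> borel_measurable borel"
  unfolding Gf_def frac_def by measurable

lemma Gf_bound: "\<bar>Gf k \<beta>\<bar> \<le> 1/2"
proof -
  have h: "0 \<le> frac (- (real k * \<beta>)) \<and> frac (- (real k * \<beta>)) < 1" using frac_lt_1 by simp
  show ?thesis unfolding Gf_def abs_le_iff using h by linarith
qed

lemma Gf_corr:
  assumes a: "a > 0" and b: "b > 0"
  shows "integral {0..1} (\<lambda>\<beta>. Gf a \<beta> * Gf b \<beta>) = real (gcd a b)^2/(12 * real a * real b)"
proof -
  have r: "Gf k (1 - u) = frac (real k * u) - 1/2" for k u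
  proof -
    have "- (real k * (1 - u)) = real_of_int (- int k) + real k * u" by (simp add: algebra_simps)
    then show ?thesis unfolding Gf_def by (simp only: frac_int_add)
  qed
  have "integral {0..1} (\<lambda>\<beta>. Gf a \<beta> * Gf b \<beta>) = integral {0..1} (\<lambda>u. Gf a (1 - u) * Gf b (1 - u))"
  proof (rule integral_reflect01[symmetric, where B=1])
    show "(\<lambda>\<beta>. Gf a \<beta> * Gf b \<beta>) \<in> borel_measurable borel" by measurable
    show "\<bar>Gf a x * Gf b x\<bar> \<le> 1" for x
      using Gf_bound[of a x] Gf_bound[of b x] by (simp add: abs_mult mult_le_one)
  qed
  also have "\<dots> = integral {0..1} (\<lambda>u. frac (real a * u) * frac (real b * u) - (1/2) * frac (real a * u) - (1/2) * frac (real b * u) + 1/4)"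
    by (simp add: r algebra_simps)
  also have "\<dots> = (1/4 + real (gcd a b)^2/(12 * real a * real b)) - (1/2) * (1/2) - (1/2) * (1/2) + 1/4"
  proof -
    have "((\<lambda>u. frac (real a * u) * frac (real b * u) - (1/2) * frac (real a * u) - (1/2) * frac (real b * u) + 1/4) has_integral
      ((1/4 + real (gcd a b)^2/(12 * real a * real b)) - (1/2) * (1/2) - (1/2) * (1/2) + 1/4 * (1 - 0))) {0..1}"
    proof (intro has_integral_add has_integral_diff has_integral_mult_right has_integral_const_real)
      show "((\<lambda>u. frac (real a * u) * frac (real b * u)) has_integral 1/4 + real (gcd a b)^2/(12 * real a * real b)) {0..1}"
        using integrable_integral[OF int_frac_prod[of "real a" "real b"]] I_gen[OF a b] by simp
      show "((\<lambda>u. frac (real a * u)) has_integral 1/2) {0..1}"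
        using integrable_integral[OF int_frac[of "real a"]] integral_frac_scale[OF a] by simp
      show "((\<lambda>u. frac (real b * u)) has_integral 1/2) {0..1}"
        using integrable_integral[OF int_frac[of "real b"]] integral_frac_scale[OF b] by simp
      show "((\<lambda>x. 1/4::real) has_integral 1/4 * (1 - 0)) {0..1::real}"
        using has_integral_const_real[of "1/4::real" 0 1] by simp
    qed
    then show ?thesis by (simp add: integral_unique)
  qed
  finally show ?thesis by simp
qed



definition Dm :: "nat \<Rightarrow> real \<Rightarrow> real" where
  "Dm m \<beta> = Gf (m+1) \<beta> - Gf m \<beta>"

lemma Dm_meas[measurable]: "Dm m \<in> borel_measurable borel"
  unfolding Dm_def by measurable

lemma Dm_bound: "\<bar>Dm m \<beta>\<bar> \<le> 1"
  unfolding Dm_def using Gf_bound[of "m+1" \<beta>] Gf_bound[of m \<beta>] by linarith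

definition cgc :: "nat \<Rightarrow> nat \<Rightarrow> real" where
  "cgc a b = real (gcd a b)^2 / (12 * real a * real b)"

lemma cgc_nonneg: "cgc a b \<ge> 0" unfolding cgc_def by simp

lemma cgc_sym: "cgc a b = cgc b a" unfolding cgc_def by (simp add: gcd.commute mult.commute mult.left_commute)

lemma GG_int: "(\<lambda>\<beta>. Gf a \<beta> * Gf b \<beta>) integrable_on {0..1}"
proof (rule bdd_integrable[where B=1])
  show "(\<lambda>\<beta>. Gf a \<beta> * Gf b \<beta>) \<in> borel_measurable borel" by measurable
  show "\<bar>Gf a x * Gf b x\<bar> \<le> 1" for x
    using Gf_bound[of a x] Gf_bound[of b x] by (simp add: abs_mult mult_le_one)
qed

lemma D_corr:
  assumes m: "m > 0" and n: "n > 0"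
  shows "integral {0..1} (\<lambda>\<beta>. Dm m \<beta> * Dm n \<beta>) = cgc (m+1) (n+1) - cgc (m+1) n - cgc m (n+1) + cgc m n"
proof -
  have e: "(\<lambda>\<beta>. Dm m \<beta> * Dm n \<beta>) = (\<lambda>\<beta>. Gf (m+1) \<beta> * Gf (n+1) \<beta> - Gf (m+1) \<beta> * Gf n \<beta> - Gf m \<beta> * Gf (n+1) \<beta> + Gf m \<beta> * Gf n \<beta>)"
    by (auto simp: Dm_def algebra_simps)
  have h: "((\<lambda>\<beta>. Gf a \<beta> * Gf b \<beta>) has_integral cgc a b) {0..1}" if "a > 0" "b > 0" for a b
    using integrable_integral[OF GG_int[of a b]] Gf_corr[OF that] by (simp add: cgc_def)
  have "((\<lambda>\<beta>. Dm m \<beta> * Dm n \<beta>) has_integral (cgc (m+1) (n+1) - cgc (m+1) n - cgc m (n+1) + cgc m n)) {0..1}"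
    unfolding e by (intro has_integral_add has_integral_diff h) (use m n in auto)
  then show ?thesis by (simp add: integral_unique)
qed

definition Kk :: "nat \<Rightarrow> nat \<Rightarrow> real" where
  "Kk m n = cgc (m+1) (n+1) + cgc (m+1) n + cgc m (n+1) + cgc m n"

lemma Kk_sym: "Kk m n = Kk n m" unfolding Kk_def by (simp add: cgc_sym)
lemma Kk_nonneg: "Kk m n \<ge> 0" unfolding Kk_def by (simp add: cgc_nonneg)

lemma D_corr_bound:
  assumes "m > 0" "n > 0"
  shows "\<bar>integral {0..1} (\<lambda>\<beta>. Dm m \<beta> * Dm n \<beta>)\<bar> \<le> Kk m n"
  using cgc_nonneg[of "m+1" "n+1"] cgc_nonneg[of "m+1" n] cgc_nonneg[of m "n+1"] cgc_nonneg[of m n]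
  unfolding D_corr[OF assms] Kk_def by linarith

definition H :: "nat \<Rightarrow> real" where
  "H n = (\<Sum>j=1..n. 1 / real j)"

lemma H_nonneg: "H n \<ge> 0" unfolding H_def by (simp add: sum_nonneg)

lemma H_mono: "m \<le> n \<Longrightarrow> H m \<le> H n"
  unfolding H_def by (rule sum_mono2) auto

lemma H_ge1: "n \<ge> 1 \<Longrightarrow> H n \<ge> 1"
  using H_mono[of 1 n] by (simp add: H_def)

lemma H_pow2: "H (2^k) \<le> real k + 1"
proof (induction k)
  case 0 then show ?case by (simp add: H_def)
next
  case (Suc k)
  have split: "{1..2^Suc k} = {1..(2::nat)^k} \<union> {2^k<..2^Suc k}" by auto
  have "H (2^Suc k) = H (2^k) + (\<Sum>j\<in>{2^k<..2^Suc k}. 1 / real j)"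
    unfolding H_def split by (subst sum.union_disjoint) auto
  also have "(\<Sum>j\<in>{(2::nat)^k<..2^Suc k}. 1 / real j) \<le> real (card {(2::nat)^k<..2^Suc k}) * (1 / 2^k)"
  proof (rule sum_bounded_above)
    fix j assume "j \<in> {(2::nat)^k<..2^Suc k}"
    then have "real j \<ge> 2^k" by (simp add: less_imp_le)
    then show "1 / real j \<le> 1 / 2^k" by (simp add: frac_le)
  qed
  also have "\<dots> = 1" by simp
  finally show ?case using Suc by simp
qed

lemma sum_inv_image:
  assumes fin: "finite S" and inj: "inj_on g S" and img: "g ` S \<subseteq> {1..M}"
    and f: "\<And>k. k \<in> S \<Longrightarrow> f k = 1 / real (g k)"
  shows "(\<Sum>k\<in>S. f k) \<le> H M"
proof -
  have "(\<Sum>k\<in>S. f k) = (\<Sum>k\<in>S. 1 / real (g k))" using f by simp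
  also have "\<dots> = (\<Sum>i\<in>g ` S. 1 / real i)" by (simp add: sum.reindex[OF inj])
  also have "\<dots> \<le> (\<Sum>i\<in>{1..M}. 1 / real i)" by (rule sum_mono2[OF _ img]) auto
  finally show ?thesis by (simp add: H_def)
qed

lemma gcd_row:
  assumes p: "p > 0"
  shows "(\<Sum>k=1..M. real (gcd p k)^2 / (real p * real k)) \<le> H p * H M"
proof -
  define Dv where "Dv = {d. d dvd p}"
  have finD: "finite Dv" unfolding Dv_def using p by simp
  have step1: "real (gcd p k)^2 / (real p * real k) \<le> (\<Sum>d\<in>Dv. if d dvd k then real d^2 / (real p * real k) else 0)"
    if k: "k \<in> {1..M}" for k
  proof -
    have gD: "gcd p k \<in> Dv" unfolding Dv_def by simp
    have "(\<Sum>d\<in>Dv. if d dvd k then real d^2 / (real p * real k) else 0) =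
          (if gcd p k dvd k then real (gcd p k)^2 / (real p * real k) else 0) +
          (\<Sum>d\<in>Dv - {gcd p k}. if d dvd k then real d^2 / (real p * real k) else 0)"
      using finD gD by (simp add: sum.remove)
    also have "\<dots> \<ge> real (gcd p k)^2 / (real p * real k)"
      by (simp add: sum_nonneg)
    finally show ?thesis .
  qed
  have "(\<Sum>k=1..M. real (gcd p k)^2 / (real p * real k)) \<le>
        (\<Sum>k=1..M. \<Sum>d\<in>Dv. if d dvd k then real d^2 / (real p * real k) else 0)"
    by (rule sum_mono) (rule step1)
  also have "\<dots> = (\<Sum>d\<in>Dv. \<Sum>k=1..M. if d dvd k then real d^2 / (real p * real k) else 0)"
    by (rule sum.swap)
  also have "\<dots> = (\<Sum>d\<in>Dv. (real d / real p) * (\<Sum>k\<in>{k\<in>{1..M}. d dvd k}. real d / real k))"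
  proof (rule sum.cong[OF refl])
    fix d assume "d \<in> Dv"
    have "(\<Sum>k=1..M. if d dvd k then real d^2 / (real p * real k) else 0) =
          (\<Sum>k\<in>{k\<in>{1..M}. d dvd k}. real d^2 / (real p * real k))"
      by (rule sum.inter_filter[symmetric]) simp
    also have "\<dots> = (\<Sum>k\<in>{k\<in>{1..M}. d dvd k}. (real d / real p) * (real d / real k))"
      by (simp add: power2_eq_square)
    finally show "(\<Sum>k=1..M. if d dvd k then real d^2 / (real p * real k) else 0) =
          (real d / real p) * (\<Sum>k\<in>{k\<in>{1..M}. d dvd k}. real d / real k)"
      by (simp add: sum_distrib_left)
  qed
  also have "\<dots> \<le> (\<Sum>d\<in>Dv. (real d / real p) * H M)"
  proof (rule sum_mono)
    fix d assume d: "d \<in> Dv"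
    then have d0: "d > 0" using p unfolding Dv_def by (auto intro: Nat.gr0I)
    have "(\<Sum>k\<in>{k\<in>{1..M}. d dvd k}. real d / real k) \<le> H M"
    proof (rule sum_inv_image[where g="\<lambda>k. k div d"])
      show "inj_on (\<lambda>k. k div d) {k\<in>{1..M}. d dvd k}"
        by (rule inj_onI) (auto elim!: dvdE simp: d0)
      show "(\<lambda>k. k div d) ` {k\<in>{1..M}. d dvd k} \<subseteq> {1..M}"
      proof
        fix i assume "i \<in> (\<lambda>k. k div d) ` {k\<in>{1..M}. d dvd k}"
        then obtain k where k: "k \<in> {1..M}" "d dvd k" "i = k div d" by auto
        then obtain q where q: "k = d * q" by (auto elim!: dvdE)
        have "q \<le> d * q" using d0 by simp
        moreover have "d * q \<le> M" using k q by simp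
        ultimately have "q \<le> M" by linarith
        moreover have "i = q" using k q d0 by simp
        moreover have "q \<ge> 1" using k q by (cases q) auto
        ultimately show "i \<in> {1..M}" by simp
      qed
      show "real d / real k = 1 / real (k div d)" if "k \<in> {k\<in>{1..M}. d dvd k}" for k
        using that d0 by (auto elim!: dvdE)
    qed simp
    then show "(real d / real p) * (\<Sum>k\<in>{k\<in>{1..M}. d dvd k}. real d / real k) \<le> (real d / real p) * H M"
      by (rule mult_left_mono) simp
  qed
  also have "\<dots> = (\<Sum>d\<in>Dv. real d / real p) * H M" by (simp add: sum_distrib_right)
  also have "\<dots> \<le> H p * H M"
  proof (rule mult_right_mono[OF _ H_nonneg])
    show "(\<Sum>d\<in>Dv. real d / real p) \<le> H p"
    proof (rule sum_inv_image[OF finD, where g="\<lambda>d. p div d"])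
      show "inj_on (\<lambda>d. p div d) Dv"
      proof (rule inj_onI)
        fix x y assume x: "x \<in> Dv" and y: "y \<in> Dv" and e: "p div x = p div y"
        have "x * (p div x) = p" using x by (simp add: Dv_def)
        moreover have "y * (p div y) = p" using y by (simp add: Dv_def)
        moreover have "p div x > 0" using x p by (auto simp: Dv_def elim!: dvdE)
        ultimately show "x = y" using e by (metis mult_right_cancel neq0_conv)
      qed
      show "(\<lambda>d. p div d) ` Dv \<subseteq> {1..p}"
        using p by (auto simp: Dv_def elim!: dvdE)
      show "real d / real p = 1 / real (p div d)" if "d \<in> Dv" for d
        using that p by (auto simp: Dv_def elim!: dvdE)
    qed
  qed
  finally show ?thesis .
qed

lemma cgc_row:
  assumes p: "p > 0" "p \<le> N + 1"
  shows "(\<Sum>k=1..N+1. cgc p k) \<le> H (N+1)^2 / 12"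
proof -
  have "(\<Sum>k=1..N+1. cgc p k) = (\<Sum>k=1..N+1. real (gcd p k)^2 / (real p * real k)) / 12"
    by (subst sum_divide_distrib) (rule sum.cong, simp, simp add: cgc_def ac_simps)
  also have "\<dots> \<le> H p * H (N+1) / 12"
    by (rule divide_right_mono[OF gcd_row[OF p(1)]]) simp
  also have "\<dots> \<le> H (N+1) * H (N+1) / 12"
    using H_mono[OF p(2)] H_nonneg[of "N+1"] by (simp add: mult_right_mono divide_right_mono)
  finally show ?thesis by (simp add: power2_eq_square)
qed

lemma cgc_row2:
  assumes p: "p > 0" "p \<le> N + 1"
  shows "(\<Sum>n=1..N. cgc p n) \<le> H (N+1)^2 / 12" "(\<Sum>n=1..N. cgc p (n+1)) \<le> H (N+1)^2 / 12"
proof -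
  have "(\<Sum>n=1..N. cgc p n) \<le> (\<Sum>k=1..N+1. cgc p k)"
    by (rule sum_mono2) (auto simp: cgc_nonneg)
  then show "(\<Sum>n=1..N. cgc p n) \<le> H (N+1)^2 / 12" using cgc_row[OF p] by linarith
  have "(\<Sum>n=1..N. cgc p (n+1)) = (\<Sum>k=Suc 1..Suc N. cgc p k)"
    unfolding sum.shift_bounds_cl_Suc_ivl by simp
  also have "\<dots> \<le> (\<Sum>k=1..N+1. cgc p k)"
    by (rule sum_mono2) (auto simp: cgc_nonneg)
  finally show "(\<Sum>n=1..N. cgc p (n+1)) \<le> H (N+1)^2 / 12" using cgc_row[OF p] by linarith
qed

lemma Kk_row:
  assumes m: "m > 0" "m \<le> N"
  shows "(\<Sum>n=1..N. Kk m n) \<le> H (N+1)^2"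
proof -
  have "(\<Sum>n=1..N. Kk m n) = (\<Sum>n=1..N. cgc (m+1) (n+1)) + (\<Sum>n=1..N. cgc (m+1) n) + (\<Sum>n=1..N. cgc m (n+1)) + (\<Sum>n=1..N. cgc m n)"
    unfolding Kk_def by (simp add: sum.distrib)
  also have "\<dots> \<le> 4 * (H (N+1)^2 / 12)"
    using cgc_row2[of "m+1" N] cgc_row2[of m N] m by simp
  also have "\<dots> \<le> H (N+1)^2" by simp
  finally show ?thesis .
qed

lemma DD_int: "(\<lambda>\<beta>. Dm m \<beta> * Dm n \<beta>) integrable_on {0..1}"
proof (rule bdd_integrable[where B=1])
  show "(\<lambda>\<beta>. Dm m \<beta> * Dm n \<beta>) \<in> borel_measurable borel" by measurable
  show "\<bar>Dm m x * Dm n x\<bar> \<le> 1" for x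
    using Dm_bound[of m x] Dm_bound[of n x] by (simp add: abs_mult mult_le_one)
qed

lemma sumD_bound: "finite A \<Longrightarrow> \<bar>\<Sum>m\<in>A. c m * Dm m \<beta>\<bar> \<le> (\<Sum>m\<in>A. \<bar>c m\<bar>)"
proof -
  assume "finite A"
  have "\<bar>\<Sum>m\<in>A. c m * Dm m \<beta>\<bar> \<le> (\<Sum>m\<in>A. \<bar>c m * Dm m \<beta>\<bar>)" by (rule sum_abs)
  also have "\<dots> \<le> (\<Sum>m\<in>A. \<bar>c m\<bar>)"
    by (rule sum_mono) (simp add: abs_mult mult_left_le Dm_bound)
  finally show ?thesis .
qed

lemma sumD_sq_int:
  assumes "finite A"
  shows "(\<lambda>\<beta>. (\<Sum>m\<in>A. c m * Dm m \<beta>)^2) integrable_on {0..1}"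
proof (rule bdd_integrable[where B="(\<Sum>m\<in>A. \<bar>c m\<bar>)^2"])
  show "(\<lambda>\<beta>. (\<Sum>m\<in>A. c m * Dm m \<beta>)^2) \<in> borel_measurable borel" by measurable
  show "\<bar>(\<Sum>m\<in>A. c m * Dm m x)^2\<bar> \<le> (\<Sum>m\<in>A. \<bar>c m\<bar>)^2" for x
  proof -
    have "\<bar>\<Sum>m\<in>A. c m * Dm m x\<bar> \<le> \<bar>\<Sum>m\<in>A. \<bar>c m\<bar>\<bar>" using sumD_bound[OF assms, of c x] by simp
    then have "\<bar>\<Sum>m\<in>A. c m * Dm m x\<bar>^2 \<le> (\<Sum>m\<in>A. \<bar>c m\<bar>)^2" by (intro power_mono) auto
    then show ?thesis by simp
  qed
qed

lemma quad_real:
  assumes A: "A \<subseteq> {1..N}"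
  shows "integral {0..1} (\<lambda>\<beta>. (\<Sum>m\<in>A. c m * Dm m \<beta>)^2) \<le> H (N+1)^2 * (\<Sum>m\<in>A. (c m)^2)"
proof -
  have fin: "finite A" using A finite_subset by blast
  have pos: "m \<in> A \<Longrightarrow> m > 0" for m using A by auto
  have "integral {0..1} (\<lambda>\<beta>. (\<Sum>m\<in>A. c m * Dm m \<beta>)^2)
      = integral {0..1} (\<lambda>\<beta>. \<Sum>m\<in>A. \<Sum>n\<in>A. (c m * c n) * (Dm m \<beta> * Dm n \<beta>))"
    by (simp add: power2_eq_square sum_product algebra_simps)
  also have "\<dots> = (\<Sum>m\<in>A. \<Sum>n\<in>A. (c m * c n) * integral {0..1} (\<lambda>\<beta>. Dm m \<beta> * Dm n \<beta>))"
  proof -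
    have i1: "(\<lambda>\<beta>. (c m * c n) * (Dm m \<beta> * Dm n \<beta>)) integrable_on {0..1}" for m n
      using integrable_cmul[OF DD_int[of m n], of "c m * c n"] by simp
    have i2: "(\<lambda>\<beta>. \<Sum>n\<in>A. (c m * c n) * (Dm m \<beta> * Dm n \<beta>)) integrable_on {0..1}" for m
      by (rule integrable_sum[OF fin]) (rule i1)
    show ?thesis
      by (simp add: integral_sum[OF fin i2] integral_sum[OF fin i1] integral_mult_right)
  qed
  also have "\<dots> \<le> (\<Sum>m\<in>A. \<Sum>n\<in>A. ((c m)^2 / 2 + (c n)^2 / 2) * Kk m n)"
  proof (intro sum_mono)
    fix m n assume m: "m \<in> A" and n: "n \<in> A"
    have "(c m * c n) * integral {0..1} (\<lambda>\<beta>. Dm m \<beta> * Dm n \<beta>) \<le> \<bar>c m * c n\<bar> * Kk m n"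
    proof -
      have "(c m * c n) * integral {0..1} (\<lambda>\<beta>. Dm m \<beta> * Dm n \<beta>) \<le> \<bar>(c m * c n) * integral {0..1} (\<lambda>\<beta>. Dm m \<beta> * Dm n \<beta>)\<bar>" by simp
      also have "\<dots> = \<bar>c m * c n\<bar> * \<bar>integral {0..1} (\<lambda>\<beta>. Dm m \<beta> * Dm n \<beta>)\<bar>" by (simp add: abs_mult)
      also have "\<dots> \<le> \<bar>c m * c n\<bar> * Kk m n"
        by (rule mult_left_mono[OF D_corr_bound[OF pos[OF m] pos[OF n]]]) simp
      finally show ?thesis .
    qed
    also have "\<dots> \<le> ((c m)^2 / 2 + (c n)^2 / 2) * Kk m n"
    proof (rule mult_right_mono[OF _ Kk_nonneg])
      have "0 \<le> (\<bar>c m\<bar> - \<bar>c n\<bar>)^2" by simp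
      then show "\<bar>c m * c n\<bar> \<le> (c m)^2 / 2 + (c n)^2 / 2"
        by (simp add: power2_eq_square algebra_simps abs_mult)
    qed
    finally show "(c m * c n) * integral {0..1} (\<lambda>\<beta>. Dm m \<beta> * Dm n \<beta>) \<le> ((c m)^2 / 2 + (c n)^2 / 2) * Kk m n" .
  qed
  also have "\<dots> = (\<Sum>m\<in>A. \<Sum>n\<in>A. (c m)^2 / 2 * Kk m n) + (\<Sum>m\<in>A. \<Sum>n\<in>A. (c n)^2 / 2 * Kk m n)"
    by (simp add: distrib_right sum.distrib)
  also have "(\<Sum>m\<in>A. \<Sum>n\<in>A. (c n)^2 / 2 * Kk m n) = (\<Sum>m\<in>A. \<Sum>n\<in>A. (c m)^2 / 2 * Kk m n)"
    by (rule trans[OF sum.swap]) (simp add: Kk_sym)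
  also have "(\<Sum>m\<in>A. \<Sum>n\<in>A. (c m)^2 / 2 * Kk m n) + (\<Sum>m\<in>A. \<Sum>n\<in>A. (c m)^2 / 2 * Kk m n)
      = (\<Sum>m\<in>A. (c m)^2 * (\<Sum>n\<in>A. Kk m n))"
    by (simp add: sum_distrib_left sum_distrib_right sum.distrib[symmetric] mult.commute)
  also have "\<dots> \<le> (\<Sum>m\<in>A. (c m)^2 * H (N+1)^2)"
  proof (rule sum_mono)
    fix m assume m: "m \<in> A"
    have "(\<Sum>n\<in>A. Kk m n) \<le> (\<Sum>n=1..N. Kk m n)" by (rule sum_mono2) (use A in \<open>auto simp: Kk_nonneg\<close>)
    also have "\<dots> \<le> H (N+1)^2" by (rule Kk_row) (use A m in auto)
    finally show "(c m)^2 * (\<Sum>n\<in>A. Kk m n) \<le> (c m)^2 * H (N+1)^2" by (simp add: mult_left_mono)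
  qed
  also have "\<dots> = H (N+1)^2 * (\<Sum>m\<in>A. (c m)^2)" by (simp add: sum_distrib_left mult.commute)
  finally show ?thesis .
qed

lemma quad_cplx:
  fixes a :: "nat \<Rightarrow> complex"
  assumes A: "A \<subseteq> {1..N}"
  shows "integral {0..1} (\<lambda>\<beta>. (cmod (\<Sum>m\<in>A. a m * complex_of_real (Dm m \<beta>)))^2) \<le> H (N+1)^2 * (\<Sum>m\<in>A. (cmod (a m))^2)"
proof -
  have fin: "finite A" using A finite_subset by blast
  have eq: "(cmod (\<Sum>m\<in>A. a m * complex_of_real (Dm m \<beta>)))^2
       = (\<Sum>m\<in>A. Re (a m) * Dm m \<beta>)^2 + (\<Sum>m\<in>A. Im (a m) * Dm m \<beta>)^2" for \<beta>
    by (simp add: cmod_power2 Re_sum Im_sum)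
  have "integral {0..1} (\<lambda>\<beta>. (cmod (\<Sum>m\<in>A. a m * complex_of_real (Dm m \<beta>)))^2)
     = integral {0..1} (\<lambda>\<beta>. (\<Sum>m\<in>A. Re (a m) * Dm m \<beta>)^2) + integral {0..1} (\<lambda>\<beta>. (\<Sum>m\<in>A. Im (a m) * Dm m \<beta>)^2)"
    unfolding eq by (rule integral_add) (rule sumD_sq_int[OF fin])+
  also have "\<dots> \<le> H (N+1)^2 * (\<Sum>m\<in>A. (Re (a m))^2) + H (N+1)^2 * (\<Sum>m\<in>A. (Im (a m))^2)"
    by (intro add_mono quad_real[OF A])
  also have "\<dots> = H (N+1)^2 * (\<Sum>m\<in>A. (cmod (a m))^2)"
    by (simp add: cmod_power2 sum.distrib distrib_left)
  finally show ?thesis .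
qed



definition blk :: "(nat \<Rightarrow> complex) \<Rightarrow> nat \<Rightarrow> nat \<Rightarrow> complex" where
  "blk b s L = (\<Sum>m\<in>{s<..s+L}. b m)"

definition Qf :: "(nat \<Rightarrow> complex) \<Rightarrow> nat \<Rightarrow> nat \<Rightarrow> real" where
  "Qf b u i = (\<Sum>l\<le>i. \<Sum>j<2^(i-l). (cmod (blk b (u + j*2^l) (2^l)))^2)"

lemma Qf_nonneg: "Qf b u i \<ge> 0" unfolding Qf_def by (intro sum_nonneg) simp

lemma sum_double: "(\<Sum>j<2*(T::nat). g j) = (\<Sum>j<T. g j) + (\<Sum>j<T. (g (j+T)::real))"
proof -
  have "(\<Sum>j<2*T. g j) = (\<Sum>j\<in>{0..<T+T}. g j)" by (simp add: atLeast0LessThan mult_2)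
  also have "\<dots> = (\<Sum>j\<in>{0..<T}. g j) + (\<Sum>j\<in>{T..<T+T}. g j)"
    by (rule sum.atLeastLessThan_concat[symmetric]) auto
  also have "(\<Sum>j\<in>{T..<T+T}. g j) = (\<Sum>j\<in>{0..<T}. g (j+T))"
    using sum.shift_bounds_nat_ivl[of g 0 T T] by simp
  finally show ?thesis by (simp add: atLeast0LessThan)
qed

lemma Qf_top: "(cmod (blk b u (2^i)))^2 \<le> Qf b u i"
proof -
  have "(cmod (blk b u (2^i)))^2 = (\<Sum>j<2^(i-i). (cmod (blk b (u + j*2^i) (2^i)))^2)" by simp
  also have "\<dots> \<le> Qf b u i" unfolding Qf_def
    by (rule member_le_sum[of i "{..i}"]) (auto intro: sum_nonneg)
  finally show ?thesis .
qed

lemma Qf_split: "Qf b u i + Qf b (u + 2^i) i \<le> Qf b u (Suc i)"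
proof -
  have "Qf b u (Suc i) = (\<Sum>l\<le>i. \<Sum>j<2^(Suc i-l). (cmod (blk b (u + j*2^l) (2^l)))^2) +
            (\<Sum>j<2^(Suc i-Suc i). (cmod (blk b (u + j*2^Suc i) (2^Suc i)))^2)"
    unfolding Qf_def by simp
  also have "(\<Sum>l\<le>i. \<Sum>j<2^(Suc i-l). (cmod (blk b (u + j*2^l) (2^l)))^2) =
     (\<Sum>l\<le>i. (\<Sum>j<2^(i-l). (cmod (blk b (u + j*2^l) (2^l)))^2) + (\<Sum>j<2^(i-l). (cmod (blk b (u + 2^i + j*2^l) (2^l)))^2))"
  proof (rule sum.cong[OF refl])
    fix l assume l: "l \<in> {..i}"
    have p: "(2::nat)^(Suc i - l) = 2 * 2^(i-l)" using l by (simp add: Suc_diff_le)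
    have sh: "u + (j + 2^(i-l)) * 2^l = (u + 2^i) + j * 2^l" for j
    proof -
      have "(2::nat)^(i-l) * 2^l = 2^i" using l by (simp add: power_add[symmetric])
      then show ?thesis by (simp add: algebra_simps)
    qed
    show "(\<Sum>j<2^(Suc i-l). (cmod (blk b (u + j*2^l) (2^l)))^2) =
          (\<Sum>j<2^(i-l). (cmod (blk b (u + j*2^l) (2^l)))^2) + (\<Sum>j<2^(i-l). (cmod (blk b (u + 2^i + j*2^l) (2^l)))^2)"
      unfolding p sum_double sh by simp
  qed
  also have "\<dots> = Qf b u i + Qf b (u + 2^i) i"
    unfolding Qf_def by (rule sum.distrib)
  finally show ?thesis by (simp add: sum_nonneg)
qed

lemma blk_split: "r1 \<le> r \<Longrightarrow> blk b u r = blk b u r1 + blk b (u + r1) (r - r1)"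
proof -
  assume r: "r1 \<le> r"
  have "{u<..u+r} = {u<..u+r1} \<union> {u+r1<..u+r}" using r by auto
  then show ?thesis unfolding blk_def using r by (simp add: sum.union_disjoint)
qed

lemma sq_ineq:
  fixes x y t :: real
  assumes t: "t > 0"
  shows "(x + y)^2 \<le> (t+1) * x^2 + ((t+1)/t) * y^2"
proof -
  have "t * ((t+1) * x^2 + ((t+1)/t) * y^2 - (x + y)^2) = (t * x - y)^2"
    using t by (simp add: field_simps power2_eq_square)
  then have "t * ((t+1) * x^2 + ((t+1)/t) * y^2 - (x + y)^2) \<ge> 0" by simp
  then show ?thesis using t by (simp add: zero_le_mult_iff)
qed

lemma maximal:
  fixes k r u :: nat
  shows "r \<le> 2^k \<Longrightarrow> (cmod (blk b u r))^2 \<le> (real k + 1) * Qf b u k"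
proof (induction k arbitrary: u r)
  case 0
  then have "r = 0 \<or> r = 1" by auto
  then show ?case
  proof
    assume "r = 0" then show ?thesis by (simp add: blk_def Qf_nonneg)
  next
    assume "r = 1" then show ?thesis by (simp add: Qf_def)
  qed
next
  case (Suc k)
  show ?case
  proof (cases "r \<le> 2^k")
    case True
    have "(cmod (blk b u r))^2 \<le> (real k + 1) * Qf b u k" by (rule Suc.IH[OF True])
    also have "\<dots> \<le> (real (Suc k) + 1) * Qf b u (Suc k)"
      using Qf_split[of b u k] Qf_nonneg[of b u k] Qf_nonneg[of b "u+2^k" k]
      by (intro mult_mono) auto
    finally show ?thesis .
  next
    case False
    define A where "A = blk b u (2^k)"
    define B where "B = blk b (u + 2^k) (r - 2^k)"
    have e: "blk b u r = A + B" unfolding A_def B_def using False by (intro blk_split) simp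
    have hA: "(cmod A)^2 \<le> Qf b u k" unfolding A_def by (rule Qf_top)
    have hB: "(cmod B)^2 \<le> (real k + 1) * Qf b (u + 2^k) k"
      unfolding B_def by (rule Suc.IH) (use Suc.prems in simp)
    have "(cmod (blk b u r))^2 \<le> (cmod A + cmod B)^2"
      unfolding e by (intro power_mono norm_triangle_ineq) simp
    also have "\<dots> \<le> (real k + 1 + 1) * (cmod A)^2 + ((real k + 1 + 1)/(real k + 1)) * (cmod B)^2"
      by (rule sq_ineq) simp
    also have "\<dots> \<le> (real k + 1 + 1) * Qf b u k + ((real k + 1 + 1)/(real k + 1)) * ((real k + 1) * Qf b (u + 2^k) k)"
      by (intro add_mono mult_left_mono hA hB) auto
    also have "\<dots> = (real k + 2) * (Qf b u k + Qf b (u + 2^k) k)"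
      by (simp add: field_simps)
    also have "\<dots> \<le> (real (Suc k) + 1) * Qf b u (Suc k)"
      using Qf_split[of b u k] by (intro mult_mono) (auto simp: Qf_nonneg add_nonneg_nonneg)
    finally show ?thesis .
  qed
qed

lemma sum_blocks: "(\<Sum>j<(J::nat). \<Sum>m\<in>{s + j*L<..s + (j+1)*L}. (g m::real)) = (\<Sum>m\<in>{s<..s + J*(L::nat)}. g m)"
proof (induction J)
  case 0 then show ?case by simp
next
  case (Suc J)
  have "{s<..s + Suc J * L} = {s<..s + J*L} \<union> {s + J*L<..s + (J+1)*L}" by auto
  then have "(\<Sum>m\<in>{s<..s + Suc J * L}. g m) = (\<Sum>m\<in>{s<..s + J*L}. g m) + (\<Sum>m\<in>{s + J*L<..s + (J+1)*L}. g m)"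
    by (simp add: sum.union_disjoint)
  then show ?case using Suc by simp
qed



lemma frac_neg_ceiling: "frac (- y) = real_of_int \<lceil>y\<rceil> - (y::real)"
  by (simp add: frac_def ceiling_def)

lemma Dm_ceiling: "Dm m \<beta> = real_of_int (\<lceil>(real m + 1) * \<beta>\<rceil> - \<lceil>real m * \<beta>\<rceil>) - \<beta>"
  unfolding Dm_def Gf_def frac_neg_ceiling by (simp add: algebra_simps)

lemma beatty_iff:
  assumes \<alpha>: "\<alpha> > 1" and m: "m \<ge> 1"
  shows "(m \<in> beatty \<alpha>) \<longleftrightarrow> \<lceil>(real m + 1) * (1/\<alpha>)\<rceil> = \<lceil>real m * (1/\<alpha>)\<rceil> + 1"
    and "\<lceil>(real m + 1) * (1/\<alpha>)\<rceil> = \<lceil>real m * (1/\<alpha>)\<rceil> \<or> \<lceil>(real m + 1) * (1/\<alpha>)\<rceil> = \<lceil>real m * (1/\<alpha>)\<rceil> + 1"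
proof -
  define \<beta> where "\<beta> = 1/\<alpha>"
  have b0: "\<beta> > 0" and b1: "\<beta> < 1" using \<alpha> by (auto simp: \<beta>_def)
  define c where "c = \<lceil>real m * \<beta>\<rceil>"
  define d where "d = \<lceil>(real m + 1) * \<beta>\<rceil>"
  have cd: "c \<le> d" unfolding c_def d_def using b0 by (intro ceiling_mono) (simp add: mult_right_mono)
  have dc: "d \<le> c + 1"
  proof -
    have "(real m + 1) * \<beta> = real m * \<beta> + \<beta>" by (simp add: algebra_simps)
    also have "\<dots> \<le> real_of_int c + 1" unfolding c_def using b1 le_of_int_ceiling[of "real m * \<beta>"] by linarith
    finally show ?thesis unfolding d_def by (simp add: ceiling_le_iff)
  qed
  show "d = c \<or> d = c + 1" using cd dc by linarith
  then show "(m \<in> beatty \<alpha>) \<longleftrightarrow> \<lceil>(real m + 1) * (1/\<alpha>)\<rceil> = \<lceil>real m * (1/\<alpha>)\<rceil> + 1"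
    unfolding \<beta>_def[symmetric] c_def[symmetric] d_def[symmetric]
  proof -
    have "m \<in> beatty \<alpha> \<longleftrightarrow> d = c + 1"
    proof
      assume "m \<in> beatty \<alpha>"
      then obtain n where n: "n \<ge> 1" "nat \<lfloor>real n * \<alpha>\<rfloor> = m" unfolding beatty_def by auto
      have pos: "real n * \<alpha> > 0" using n \<alpha> by simp
      then have fl: "\<lfloor>real n * \<alpha>\<rfloor> = int m" using n(2) by linarith
      have "real m \<le> real n * \<alpha>" "real n * \<alpha> < real m + 1" using fl by linarith+
      then have lo: "real m * \<beta> \<le> real n" and hi: "real n < (real m + 1) * \<beta>"
        using \<alpha> by (auto simp: \<beta>_def field_simps)
      have "c \<le> int n" unfolding c_def using lo by (simp add: ceiling_le_iff)
      moreover have "int n < d" unfolding d_def using hi by (simp add: less_ceiling_iff)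
      ultimately show "d = c + 1" using dc by linarith
    next
      assume e: "d = c + 1"
      have lo: "real m * \<beta> \<le> real_of_int c" unfolding c_def by simp
      have hi: "real_of_int c < (real m + 1) * \<beta>"
      proof -
        have "c < d" using e by simp
        then show ?thesis unfolding d_def by (simp add: less_ceiling_iff)
      qed
      have cpos: "c \<ge> 1" unfolding c_def using b0 m by (simp add: one_le_ceiling)
      define n where "n = nat c"
      have nc: "real n = real_of_int c" using cpos by (simp add: n_def)
      have "real m \<le> real n * \<alpha>" "real n * \<alpha> < real m + 1"
        using lo hi \<alpha> nc by (auto simp: \<beta>_def field_simps)
      then have "\<lfloor>real n * \<alpha>\<rfloor> = int m" by linarith
      then have "nat \<lfloor>real n * \<alpha>\<rfloor> = m" by simp
      moreover have "n \<ge> 1" using cpos by (simp add: n_def)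
      ultimately show "m \<in> beatty \<alpha>" unfolding beatty_def by auto
    qed
    then show "(m \<in> beatty \<alpha>) = (d = c + 1)" .
  qed
qed

lemma beatty_Dm:
  assumes \<alpha>: "\<alpha> > 1" and m: "m \<ge> 1"
  shows "(if m \<in> beatty \<alpha> then 1 else 0) - 1/\<alpha> = Dm m (1/\<alpha>)"
  using beatty_iff[OF assms] unfolding Dm_ceiling by auto

lemma S_identity:
  assumes \<alpha>: "\<alpha> > 1"
  shows "S_beatty \<alpha> f x - S_full f x / complex_of_real \<alpha>
       = (\<Sum>m\<in>{1..nat \<lfloor>x\<rfloor>}. f m * complex_of_real (Dm m (1/\<alpha>)))"
proof -
  have "S_beatty \<alpha> f x = (\<Sum>m\<in>{1..nat \<lfloor>x\<rfloor>}. if m \<in> beatty \<alpha> then f m else 0)"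
    unfolding S_beatty_def by (rule sum.inter_restrict) simp
  moreover have "S_full f x / complex_of_real \<alpha> = (\<Sum>m\<in>{1..nat \<lfloor>x\<rfloor>}. f m * complex_of_real (1/\<alpha>))"
    unfolding S_full_def by (simp add: divide_complex_def sum_distrib_right)
  ultimately have "S_beatty \<alpha> f x - S_full f x / complex_of_real \<alpha>
     = (\<Sum>m\<in>{1..nat \<lfloor>x\<rfloor>}. f m * complex_of_real ((if m \<in> beatty \<alpha> then 1 else 0) - 1/\<alpha>))"
    by (simp add: sum_subtractf[symmetric] algebra_simps of_real_diff) (intro sum.cong refl, simp)
  also have "\<dots> = (\<Sum>m\<in>{1..nat \<lfloor>x\<rfloor>}. f m * complex_of_real (Dm m (1/\<alpha>)))"
    by (intro sum.cong refl) (simp add: beatty_Dm[OF \<alpha>])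
  finally show ?thesis .
qed



definition bf :: "(nat \<Rightarrow> complex) \<Rightarrow> real \<Rightarrow> nat \<Rightarrow> complex" where
  "bf f \<beta> m = f m * complex_of_real (Dm m \<beta>)"

definition Qk :: "(nat \<Rightarrow> complex) \<Rightarrow> nat \<Rightarrow> real \<Rightarrow> real" where
  "Qk f k \<beta> = Qf (bf f \<beta>) 0 (Suc k)"

definition S2 :: "(nat \<Rightarrow> complex) \<Rightarrow> nat \<Rightarrow> real" where
  "S2 f j = (\<Sum>m\<in>{1..(2::nat)^j}. (cmod (f m))^2)"

lemma S2_nonneg: "S2 f j \<ge> 0" unfolding S2_def by (simp add: sum_nonneg)

lemma term_eq:
  "(cmod (\<Sum>m\<in>A. a m * complex_of_real (Dm m \<beta>)))^2
       = (\<Sum>m\<in>A. Re (a m) * Dm m \<beta>)^2 + (\<Sum>m\<in>A. Im (a m) * Dm m \<beta>)^2"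
  by (simp add: cmod_power2 Re_sum Im_sum)

lemma term_int:
  assumes "finite A"
  shows "(\<lambda>\<beta>. (cmod (\<Sum>m\<in>A. a m * complex_of_real (Dm m \<beta>)))^2) integrable_on {0..1}"
  unfolding term_eq by (intro integrable_add sumD_sq_int assms)

lemma term_meas:
  "(\<lambda>\<beta>. (cmod (\<Sum>m\<in>A. a m * complex_of_real (Dm m \<beta>)))^2) \<in> borel_measurable borel"
  unfolding term_eq by measurable

lemma Qk_expand: "Qk f k \<beta> = (\<Sum>l\<le>Suc k. \<Sum>j<2^(Suc k-l).
     (cmod (\<Sum>m\<in>{j*2^l<..j*2^l + 2^l}. f m * complex_of_real (Dm m \<beta>)))^2)"
  unfolding Qk_def Qf_def blk_def bf_def by simp

lemma Qk_meas[measurable]: "Qk f k \<in> borel_measurable borel"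
  unfolding Qk_expand[abs_def] by (intro borel_measurable_sum term_meas)

lemma Qk_nonneg: "Qk f k \<beta> \<ge> 0" unfolding Qk_def by (rule Qf_nonneg)

lemma Qk_int: "Qk f k integrable_on {0..1}"
  unfolding Qk_expand[abs_def] by (intro integrable_sum term_int) auto

lemma Qk_int_bound: "integral {0..1} (Qk f k) \<le> (real k + 3)^3 * S2 f (Suc k)"
proof -
  define N where "N = (2::nat)^(Suc k)"
  have "integral {0..1} (Qk f k) = (\<Sum>l\<le>Suc k. \<Sum>j<2^(Suc k-l).
     integral {0..1} (\<lambda>\<beta>. (cmod (\<Sum>m\<in>{j*2^l<..j*2^l + 2^l}. f m * complex_of_real (Dm m \<beta>)))^2))"
    unfolding Qk_expand[abs_def]
    by (subst integral_sum, simp, intro integrable_sum term_int, simp, simp)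
       (intro sum.cong refl integral_sum term_int, simp_all)
  also have "\<dots> \<le> (\<Sum>l\<le>Suc k. \<Sum>j<2^(Suc k-l). H (N+1)^2 * (\<Sum>m\<in>{j*2^l<..j*2^l + 2^l}. (cmod (f m))^2))"
  proof (intro sum_mono quad_cplx)
    fix l j :: nat assume l: "l \<in> {..Suc k}" and j: "j \<in> {..<2^(Suc k-l)}"
    have "(j + 1) * 2^l \<le> 2^(Suc k - l) * (2::nat)^l" using j by (intro mult_right_mono) auto
    also have "\<dots> = N" using l by (simp add: N_def power_add[symmetric])
    finally show "{j*2^l<..j*2^l + 2^l} \<subseteq> {1..N}" by (auto simp: algebra_simps)
  qed
  also have "\<dots> = (\<Sum>l\<le>Suc k. H (N+1)^2 * S2 f (Suc k))"
  proof (intro sum.cong refl)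
    fix l assume l: "l \<in> {..Suc k}"
    have "(\<Sum>j<2^(Suc k-l). (\<Sum>m\<in>{j*2^l<..j*2^l + 2^l}. (cmod (f m))^2))
        = (\<Sum>j<2^(Suc k-l). (\<Sum>m\<in>{0 + j*2^l<..0 + (j+1)*2^l}. (cmod (f m))^2))"
      by (simp add: algebra_simps)
    also have "\<dots> = (\<Sum>m\<in>{0<..0 + 2^(Suc k-l)*2^l}. (cmod (f m))^2)" by (rule sum_blocks)
    also have "{0<..0 + 2^(Suc k-l)*(2::nat)^l} = {1..N}"
      using l by (auto simp: N_def power_add[symmetric])
    finally show "(\<Sum>j<2^(Suc k-l). H (N+1)^2 * (\<Sum>m\<in>{j*2^l<..j*2^l + 2^l}. (cmod (f m))^2)) = H (N+1)^2 * S2 f (Suc k)"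
      by (simp add: sum_distrib_left[symmetric] S2_def N_def)
  qed
  also have "\<dots> = (real k + 2) * H (N+1)^2 * S2 f (Suc k)" by simp
  also have "\<dots> \<le> (real k + 2) * (real k + 3)^2 * S2 f (Suc k)"
  proof -
    have "H (N+1) \<le> H (2^(Suc (Suc k)))" unfolding N_def by (rule H_mono) simp
    also have "\<dots> \<le> real k + 3" using H_pow2[of "Suc (Suc k)"] by simp
    finally have "H (N+1)^2 \<le> (real k + 3)^2" using H_nonneg by (intro power_mono) auto
    then show ?thesis using S2_nonneg[of f "Suc k"] by (intro mult_right_mono mult_left_mono) auto
  qed
  also have "\<dots> \<le> (real k + 3)^3 * S2 f (Suc k)"
    using S2_nonneg[of f "Suc k"] by (intro mult_right_mono) (auto simp: power3_eq_cube power2_eq_square)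
  finally show ?thesis .
qed

lemma BC:
  fixes Z :: "nat \<Rightarrow> real \<Rightarrow> real"
  assumes int: "\<And>k. Z k integrable_on {0..1}" and nn: "\<And>k \<beta>. Z k \<beta> \<ge> 0"
    and meas: "\<And>k. Z k \<in> borel_measurable borel" and sc: "summable c"
    and bd: "\<And>k. integral {0..1} (Z k) \<le> c k"
  shows "AE \<beta> in lborel. \<beta> \<in> {0..1} \<longrightarrow> (\<forall>\<^sub>F k in sequentially. Z k \<beta> < 1)"
proof -
  define F where "F = (\<lambda>\<beta>. \<Sum>k. ennreal (indicator {0..1} \<beta> * Z k \<beta>))"
  have c0: "c k \<ge> 0" for k using bd[of k] integral_nonneg[OF int nn] by (meson order_trans)
  have mk: "(\<lambda>\<beta>. ennreal (indicator {0..1} \<beta> * Z k \<beta>)) \<in> borel_measurable lborel" for k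
    using meas[of k] by measurable
  have "(\<integral>\<^sup>+ \<beta>. F \<beta> \<partial>lborel) = (\<Sum>k. \<integral>\<^sup>+ \<beta>. ennreal (indicator {0..1} \<beta> * Z k \<beta>) \<partial>lborel)"
    unfolding F_def by (rule nn_integral_suminf[OF mk])
  also have "\<dots> = (\<Sum>k. ennreal (integral {0..1} (Z k)))"
  proof (intro suminf_cong)
    fix k
    show "(\<integral>\<^sup>+ \<beta>. ennreal (indicator {0..1} \<beta> * Z k \<beta>) \<partial>lborel) = ennreal (integral {0..1} (Z k))"
      by (rule nn_integral_has_integral_lebesgue) (use nn int in \<open>auto simp: integrable_integral\<close>)
  qed
  also have "\<dots> \<le> (\<Sum>k. ennreal (c k))"
    by (intro suminf_le summableI) (simp add: bd ennreal_leI)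
  also have "\<dots> < \<infinity>" using ennreal_suminf_neq_top[OF sc c0] by (simp add: top.not_eq_extremum)
  finally have fin: "(\<integral>\<^sup>+ \<beta>. F \<beta> \<partial>lborel) \<noteq> \<infinity>" by simp
  have mF: "F \<in> borel_measurable lborel" unfolding F_def using mk by measurable
  have ae: "AE \<beta> in lborel. F \<beta> \<noteq> \<infinity>" by (rule nn_integral_PInf_AE[OF mF fin])
  show ?thesis
  proof (rule AE_mp[OF ae], intro AE_I2 impI)
    fix \<beta> :: real assume Fb: "F \<beta> \<noteq> \<infinity>" and b: "\<beta> \<in> {0..1}"
    have "(\<Sum>k. ennreal (Z k \<beta>)) \<noteq> \<infinity>" using Fb b by (simp add: F_def)
    then have "summable (\<lambda>k. Z k \<beta>)" using summable_suminf_not_top[of "\<lambda>k. Z k \<beta>"] nn by auto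
    then have "(\<lambda>k. Z k \<beta>) \<longlonglongrightarrow> 0" by (rule summable_LIMSEQ_zero)
    then show "\<forall>\<^sub>F k in sequentially. Z k \<beta> < 1" by (rule order_tendstoD) simp
  qed
qed



lemma Mf_ge: "1 \<le> m \<Longrightarrow> m \<le> nat \<lfloor>x\<rfloor> \<Longrightarrow> cmod (f m) \<le> Mf f x"
proof -
  assume "1 \<le> m" "m \<le> nat \<lfloor>x\<rfloor>"
  then have "cmod (f m) \<le> Max ((\<lambda>m. cmod (f m)) ` {1..nat \<lfloor>x\<rfloor>})" by (intro Max_ge) auto
  then show ?thesis unfolding Mf_def by simp
qed

lemma Mf_ge1: "x \<ge> 1 \<Longrightarrow> Mf f x \<ge> 1"
proof -
  assume x: "x \<ge> 1"
  have "nat \<lfloor>x\<rfloor> \<ge> 1" using x by linarith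
  then have "0 \<le> cmod (f 1)" "cmod (f 1) \<le> Max ((\<lambda>m. cmod (f m)) ` {1..nat \<lfloor>x\<rfloor>})"
    by (auto intro: Max_ge)
  then show ?thesis unfolding Mf_def by linarith
qed

lemma summable_c: "summable (\<lambda>k. 1 / (real k + 3)^2)"
proof (rule summable_comparison_test'[OF inverse_power_summable[of 2, where 'a=real]])
  fix n :: nat assume "n \<ge> 1"
  then show "norm (1 / (real n + 3)^2) \<le> inverse (real n ^ 2)"
    by (simp add: field_simps power_mono)
qed simp

lemma S2_le: "2^k \<le> nat \<lfloor>x\<rfloor> \<Longrightarrow> S2 f k \<le> 2^k * (Mf f x)^2"
proof -
  assume h: "2^k \<le> nat \<lfloor>x\<rfloor>"
  have "S2 f k \<le> (\<Sum>m\<in>{1..(2::nat)^k}. (Mf f x)^2)"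
    unfolding S2_def
  proof (rule sum_mono)
    fix m assume m: "m \<in> {1..(2::nat)^k}"
    then have "m \<le> nat \<lfloor>x\<rfloor>" using h by (meson atLeastAtMost_iff order_trans)
    then have "cmod (f m) \<le> Mf f x" using m by (intro Mf_ge) auto
    then show "(cmod (f m))^2 \<le> (Mf f x)^2" by (intro power_mono) auto
  qed
  then show ?thesis by simp
qed

lemma log_poly_bound:
  fixes X :: nat and k :: nat and \<epsilon> :: real
  assumes e: "\<epsilon> > 0" and k: "2^k \<le> X" and k3: "k \<ge> 3"
  shows "real k + 3 \<le> (9/\<epsilon>) * real X powr (\<epsilon>/3)"
proof -
  have "(1::nat) \<le> 2^k" by simp
  then have "1 \<le> X" using k by linarith
  then have X1: "real X \<ge> 1" by simp
  have kr: "real (2^k) \<le> real X" using k by (simp only: of_nat_le_iff)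
  then have kr': "(2::real)^k \<le> real X" by simp
  have "real k * ln 2 = ln (2^k)" by (simp add: ln_realpow)
  also have "\<dots> \<le> ln (real X)" using kr' X1 by (subst ln_le_cancel_iff) auto
  finally have kl: "real k * ln 2 \<le> ln (real X)" .
  have "real k * (2/3) \<le> real k * ln 2" using ln2_ge_two_thirds by (intro mult_left_mono) auto
  then have "real k \<le> (3/2) * ln (real X)" using kl by linarith
  then have "real k + 3 \<le> 3 * ln (real X)" using k3 by linarith
  also have "\<dots> \<le> 3 * (real X powr (\<epsilon>/3) / (\<epsilon>/3))"
    using ln_powr_bound[OF X1, of "\<epsilon>/3"] e by simp
  also have "\<dots> = (9/\<epsilon>) * real X powr (\<epsilon>/3)" by (simp add: field_simps)
  finally show ?thesis .
qed



lemma trivial_T_bound: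
  assumes x: "x \<ge> 1"
  shows "cmod (\<Sum>m\<in>{1..nat \<lfloor>x\<rfloor>}. f m * complex_of_real (Dm m \<beta>)) \<le> real (nat \<lfloor>x\<rfloor>) * Mf f x"
proof -
  have "cmod (\<Sum>m\<in>{1..nat \<lfloor>x\<rfloor>}. f m * complex_of_real (Dm m \<beta>)) \<le> (\<Sum>m\<in>{1..nat \<lfloor>x\<rfloor>}. cmod (f m * complex_of_real (Dm m \<beta>)))"
    by (rule norm_sum)
  also have "\<dots> \<le> (\<Sum>m\<in>{1..nat \<lfloor>x\<rfloor>}. Mf f x)"
  proof (rule sum_mono)
    fix m assume m: "m \<in> {1..nat \<lfloor>x\<rfloor>}"
    have "cmod (f m * complex_of_real (Dm m \<beta>)) = cmod (f m) * \<bar>Dm m \<beta>\<bar>" by (simp add: norm_mult)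
    also have "\<dots> \<le> cmod (f m) * 1" by (intro mult_left_mono Dm_bound) simp
    also have "\<dots> \<le> Mf f x" using m by (simp add: Mf_ge)
    finally show "cmod (f m * complex_of_real (Dm m \<beta>)) \<le> Mf f x" .
  qed
  also have "\<dots> = real (nat \<lfloor>x\<rfloor>) * Mf f x" by simp
  finally show ?thesis .
qed

lemma main_eps:
  fixes f :: "nat \<Rightarrow> complex" and \<epsilon> K :: real and k0 :: nat
  assumes e: "\<epsilon> > 0" and K: "K > 0"
    and rat: "\<And>k. k \<ge> k0 \<Longrightarrow> S2 f (Suc k) \<le> K * S2 f k"
    and pos: "\<And>k. k \<ge> k0 \<Longrightarrow> S2 f k > 0"
  shows "AE \<beta> in lborel. \<beta> \<in> {0..1} \<longrightarrow> (\<exists>C>0. \<forall>x\<ge>8.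
     cmod (\<Sum>m\<in>{1..nat \<lfloor>x\<rfloor>}. f m * complex_of_real (Dm m \<beta>)) \<le> C * x powr (1/2+\<epsilon>) * Mf f x)"
proof -
  define W where "W k = (real k + 3)^5 * S2 f (Suc k)" for k
  define Z where "Z = (\<lambda>k \<beta>. (1 / W k) * Qk f k \<beta>)"
  have W0: "W k \<ge> 0" for k unfolding W_def using S2_nonneg by simp
  have Zint: "Z k integrable_on {0..1}" for k
    unfolding Z_def using integrable_cmul[OF Qk_int[of f k], of "1 / W k"] by simp
  have Znn: "Z k \<beta> \<ge> 0" for k \<beta> unfolding Z_def using W0 Qk_nonneg by simp
  have Zm: "Z k \<in> borel_measurable borel" for k unfolding Z_def by measurable
  have Zb: "integral {0..1} (Z k) \<le> 1 / (real k + 3)^2" for k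
  proof -
    have "integral {0..1} (Z k) = (1 / W k) * integral {0..1} (Qk f k)"
      unfolding Z_def by (rule integral_mult_right)
    also have "\<dots> \<le> (1 / W k) * ((real k + 3)^3 * S2 f (Suc k))"
      using W0 by (intro mult_left_mono Qk_int_bound) auto
    also have "\<dots> \<le> 1 / (real k + 3)^2"
    proof (cases "S2 f (Suc k) = 0")
      case True then show ?thesis by (simp add: W_def)
    next
      case False
      then have s: "S2 f (Suc k) > 0" using S2_nonneg[of f "Suc k"] by simp
      have a: "real k + 3 > 0" by simp
      have "(real k + 3)^5 = (real k + 3)^3 * (real k + 3)^2" by (simp add: power_add[symmetric])
      then have "(1 / W k) * ((real k + 3)^3 * S2 f (Suc k)) = 1 / (real k + 3)^2"
        unfolding W_def using s a by (simp add: divide_simps)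
      then show ?thesis by simp
    qed
    finally show ?thesis .
  qed
  have ae: "AE \<beta> in lborel. \<beta> \<in> {0..1} \<longrightarrow> (\<forall>\<^sub>F k in sequentially. Z k \<beta> < 1)"
    by (rule BC[OF Zint Znn Zm summable_c Zb])
  show ?thesis
  proof (rule AE_mp[OF ae], intro AE_I2 impI)
    fix \<beta> :: real assume ev: "\<beta> \<in> {0..1} \<longrightarrow> (\<forall>\<^sub>F k in sequentially. Z k \<beta> < 1)" and b: "\<beta> \<in> {0..1}"
    from ev b obtain k1 where k1: "\<And>k. k \<ge> k1 \<Longrightarrow> Z k \<beta> < 1" by (auto simp: eventually_sequentially)
    define k2 where "k2 = max (max k0 k1) 3"
    have Qb: "Qk f k \<beta> \<le> W k" if "k \<ge> k2" for k
    proof -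
      have "S2 f (Suc k) > 0" using pos[of "Suc k"] that by (simp add: k2_def)
      then have Wp: "W k > 0" by (simp add: W_def)
      have "Z k \<beta> < 1" using k1 that by (simp add: k2_def)
      then show ?thesis using Wp by (simp add: Z_def field_simps)
    qed
    define C where "C = 2^k2 + (9/\<epsilon>)^3 * sqrt K"
    have Cp: "C > 0" unfolding C_def using e K by (intro add_pos_nonneg) auto
    have "\<forall>x\<ge>8. cmod (\<Sum>m\<in>{1..nat \<lfloor>x\<rfloor>}. f m * complex_of_real (Dm m \<beta>)) \<le> C * x powr (1/2+\<epsilon>) * Mf f x"
    proof (intro allI impI)
      fix x :: real assume x8: "x \<ge> 8"
      define X where "X = nat \<lfloor>x\<rfloor>"
      define T where "T = (\<Sum>m\<in>{1..X}. f m * complex_of_real (Dm m \<beta>))"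
      define M where "M = Mf f x"
      define xp where "xp = x powr (1/2+\<epsilon>)"
      have X8: "X \<ge> 8" unfolding X_def using x8 by linarith
      have Xx: "real X \<le> x" unfolding X_def using x8 by linarith
      have M1: "M \<ge> 1" unfolding M_def using x8 by (intro Mf_ge1) simp
      have xp1: "xp \<ge> 1" unfolding xp_def using x8 e by (intro ge_one_powr_ge_zero) auto
      obtain k where k: "2^k \<le> X" "X < 2^(k+1)" using ex_power_ivl1[of 2 X] X8 by auto
      have "cmod T \<le> C * xp * M"
      proof (cases "k \<ge> k2")
        case True
        have k3: "k \<ge> 3" using True by (simp add: k2_def)
        have Tb: "T = blk (bf f \<beta>) 0 X"
        proof -
          have "{0<..0+X} = {1..X}" by auto
          then show ?thesis unfolding T_def blk_def bf_def by simp
        qed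
        have "(cmod T)^2 \<le> (real (Suc k) + 1) * Qf (bf f \<beta>) 0 (Suc k)"
          unfolding Tb by (rule maximal) (use k in simp)
        also have "\<dots> = (real k + 2) * Qk f k \<beta>" by (simp add: Qk_def)
        also have "\<dots> \<le> (real k + 3) * W k"
          using Qb[OF True] Qk_nonneg[of f k \<beta>] by (intro mult_mono) auto
        also have "\<dots> \<le> (real k + 3) * ((real k + 3)^5 * (K * (2^k * M^2)))"
        proof -
          have "S2 f (Suc k) \<le> K * S2 f k" using rat True by (simp add: k2_def)
          also have "\<dots> \<le> K * (2^k * M^2)"
            using K S2_le[of k x f] k(1) by (intro mult_left_mono) (auto simp: X_def M_def)
          finally show ?thesis unfolding W_def by (intro mult_left_mono) auto
        qed
        also have "\<dots> = (real k + 3)^6 * K * 2^k * M^2" by (simp add: eval_nat_numeral mult_ac)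
        also have "\<dots> \<le> ((9/\<epsilon>) * real X powr (\<epsilon>/3))^6 * K * real X * M^2"
        proof -
          have a: "(real k + 3)^6 \<le> ((9/\<epsilon>) * real X powr (\<epsilon>/3))^6"
            by (intro power_mono log_poly_bound[OF e k(1) k3]) auto
          have "real ((2::nat)^k) \<le> real X" using k(1) by (simp only: of_nat_le_iff)
          then have "(2::real)^k \<le> real X" by simp
          then show ?thesis using a K by (intro mult_mono mult_right_mono) auto
        qed
        also have "\<dots> = ((9/\<epsilon>)^3 * sqrt K * real X powr (1/2+\<epsilon>) * M)^2"
        proof -
          have X0: "real X > 0" using X8 by simp
          have p6: "(real X powr (\<epsilon>/3))^6 = real X powr (2*\<epsilon>)" using X0 by (simp add: powr_power)
          have p2: "(real X powr (1/2+\<epsilon>))^2 = real X * real X powr (2*\<epsilon>)"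
            using X0 by (simp add: powr_power powr_add algebra_simps)
          have sK: "(sqrt K)^2 = K" using K by simp
          have n: "((9/\<epsilon>)^3)^2 = (9/\<epsilon>)^6" by (simp add: power_mult[symmetric])
          have "((9/\<epsilon>) * real X powr (\<epsilon>/3))^6 * K * real X * M^2
              = (9/\<epsilon>)^6 * real X powr (2*\<epsilon>) * K * real X * M^2"
            by (simp only: power_mult_distrib p6)
          also have "\<dots> = ((9/\<epsilon>)^3)^2 * (sqrt K)^2 * (real X powr (1/2+\<epsilon>))^2 * M^2"
            by (simp only: n sK p2) (simp add: mult_ac)
          also have "\<dots> = ((9/\<epsilon>)^3 * sqrt K * real X powr (1/2+\<epsilon>) * M)^2"
            by (simp only: power_mult_distrib)
          finally show ?thesis .
        qed
        finally have sq: "(cmod T)^2 \<le> ((9/\<epsilon>)^3 * sqrt K * real X powr (1/2+\<epsilon>) * M)^2" .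
        have "cmod T \<le> (9/\<epsilon>)^3 * sqrt K * real X powr (1/2+\<epsilon>) * M"
          by (rule power2_le_imp_le[OF sq]) (use e K M1 in simp)
        also have "\<dots> \<le> (9/\<epsilon>)^3 * sqrt K * xp * M"
          unfolding xp_def using e K M1 Xx by (intro mult_right_mono mult_left_mono powr_mono2) auto
        also have "\<dots> \<le> C * xp * M"
          unfolding C_def using xp1 M1 by (intro mult_right_mono) auto
        finally show ?thesis .
      next
        case False
        have "X < 2^k2"
        proof -
          have "(2::nat)^(k+1) \<le> 2^k2" using False by (intro power_increasing) auto
          then show ?thesis using k(2) by linarith
        qed
        have "cmod T \<le> real X * M"
          unfolding T_def X_def M_def by (rule trivial_T_bound) (use x8 in simp)
        also have "\<dots> \<le> 2^k2 * M"
        proof -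
          have "real X \<le> real ((2::nat)^k2)" using \<open>X < 2^k2\<close> by (simp only: of_nat_le_iff less_imp_le)
          then have "real X \<le> 2^k2" by simp
          then show ?thesis using M1 by (intro mult_right_mono) auto
        qed
        also have "\<dots> \<le> 2^k2 * xp * M" using xp1 M1 by simp
        also have "\<dots> \<le> C * xp * M" unfolding C_def using xp1 M1 e K by (intro mult_right_mono) auto
        finally show ?thesis .
      qed
      then show "cmod (\<Sum>m\<in>{1..nat \<lfloor>x\<rfloor>}. f m * complex_of_real (Dm m \<beta>)) \<le> C * x powr (1/2+\<epsilon>) * Mf f x"
        by (simp add: T_def X_def xp_def M_def)
    qed
    then show "\<exists>C>0. \<forall>x\<ge>8. cmod (\<Sum>m\<in>{1..nat \<lfloor>x\<rfloor>}. f m * complex_of_real (Dm m \<beta>)) \<le> C * x powr (1/2+\<epsilon>) * Mf f x"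
      using Cp by blast
  qed
qed



lemma norm2_pow: "norm2_upto f (2^r) = sqrt (S2 f r)"
proof -
  have h: "nat \<lfloor>(2::real)^r\<rfloor> = 2^r"
    by (metis floor_of_nat nat_int of_nat_numeral of_nat_power)
  show ?thesis unfolding norm2_upto_def S2_def h by (rule refl)
qed

lemma null_transfer:
  assumes N: "N \<in> null_sets lborel"
  shows "{\<alpha>::real \<in> {1<..}. 1/\<alpha> \<in> N} \<in> null_sets lborel"
proof -
  define Z where "Z = {\<alpha>::real \<in> {1<..}. 1/\<alpha> \<in> N}"
  have NS: "N \<in> sets borel" using N by (simp add: null_sets_def)
  have m: "(\<lambda>\<alpha>::real. 1/\<alpha>) \<in> borel_measurable borel" by measurable
  have "Z = (\<lambda>\<alpha>. 1/\<alpha>) -` N \<inter> {1<..}" unfolding Z_def by auto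
  then have ZS: "Z \<in> sets lborel"
    using measurable_sets_borel[OF m NS] by auto
  have negN: "negligible N"
    using null_sets_completionI[OF N] by (simp add: negligible_iff_null_sets)
  have "negligible ((\<lambda>t::real. 1/t) ` (N \<inter> {0<..}))"
  proof (rule negligible_differentiable_image_negligible)
    show "negligible (N \<inter> {0<..})" using negN by (rule negligible_subset) auto
    show "(\<lambda>t::real. 1/t) differentiable_on N \<inter> {0<..}"
      unfolding differentiable_on_def by (auto intro!: derivative_eq_intros simp: field_differentiable_def[symmetric] differentiable_def)
  qed simp
  moreover have "Z \<subseteq> (\<lambda>t::real. 1/t) ` (N \<inter> {0<..})"
  proof
    fix \<alpha> assume "\<alpha> \<in> Z"
    then have a: "\<alpha> > 1" "1/\<alpha> \<in> N" by (auto simp: Z_def)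
    then have "\<alpha> = 1 / (1/\<alpha>)" "1/\<alpha> \<in> N \<inter> {0<..}" by auto
    then show "\<alpha> \<in> (\<lambda>t::real. 1/t) ` (N \<inter> {0<..})" by blast
  qed
  ultimately have "negligible Z" by (rule negligible_subset)
  then have "Z \<in> null_sets lebesgue" by (simp add: negligible_iff_null_sets)
  then show ?thesis using ZS null_sets_completion_iff unfolding Z_def by blast
qed

theorem mainTheorem2:
  fixes f :: "nat \<Rightarrow> complex"
  assumes "limsup (\<lambda>r::nat. ereal (norm2_upto f (2 ^ (r + 1)) / norm2_upto f (2 ^ r))) < \<infinity>"
  shows "\<exists>G. G \<subseteq> {1<..} \<and> ({1<..} - G) \<in> null_sets lborel \<and>
           (\<forall>\<alpha>\<in>G. \<forall>\<epsilon>>0. \<exists>C>0. \<forall>x::real. x \<ge> 8 \<longrightarrow>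
              cmod (S_beatty \<alpha> f x - S_full f x / complex_of_real \<alpha>)
                \<le> C * x powr (1/2 + \<epsilon>) * Mf f x)"
proof (cases "\<forall>m\<ge>1. f m = 0")
  case True
  have z: "S_beatty \<alpha> f x - S_full f x / complex_of_real \<alpha> = 0" for \<alpha> x
    unfolding S_beatty_def S_full_def using True by simp
  show ?thesis
  proof (intro exI[of _ "{1<..}"] conjI ballI allI impI)
    fix \<alpha> :: real and \<epsilon> :: real assume "\<epsilon> > 0"
    show "\<exists>C>0. \<forall>x::real. x \<ge> 8 \<longrightarrow> cmod (S_beatty \<alpha> f x - S_full f x / complex_of_real \<alpha>) \<le> C * x powr (1/2 + \<epsilon>) * Mf f x"
    proof (intro exI[of _ 1] conjI allI impI)
      fix x :: real assume "x \<ge> 8"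
      then have "Mf f x \<ge> 1" by (intro Mf_ge1) simp
      then show "cmod (S_beatty \<alpha> f x - S_full f x / complex_of_real \<alpha>) \<le> 1 * x powr (1/2 + \<epsilon>) * Mf f x"
        by (simp add: z)
    qed simp
  qed auto
next
  case False
  then obtain m0 where m0: "m0 \<ge> 1" "f m0 \<noteq> 0" by auto
  define ratio where "ratio r = norm2_upto f (2 ^ (r + 1)) / norm2_upto f (2 ^ r)" for r :: nat
  from assms obtain n :: nat where "limsup (\<lambda>r. ereal (ratio r)) < ereal (real n)"
    unfolding ratio_def using less_PInf_Ex_of_nat by auto
  then have "\<forall>\<^sub>F r in sequentially. ereal (ratio r) < ereal (real n)" by (rule Limsup_lessD)
  then obtain r0 where r0: "\<And>r. r \<ge> r0 \<Longrightarrow> ratio r < real n" by (auto simp: eventually_sequentially)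
  define k0 where "k0 = max r0 m0"
  define K where "K = (real n)^2 + 1"
  have Kp: "K > 0" unfolding K_def using zero_le_power2[of "real n"] by linarith
  have pos: "S2 f k > 0" if "k \<ge> k0" for k
  proof -
    have "m0 \<le> k" using that by (simp add: k0_def)
    also have "k < 2^k" by (rule less_exp)
    finally have "m0 \<in> {1..(2::nat)^k}" using m0 by simp
    then have "(cmod (f m0))^2 \<le> S2 f k" unfolding S2_def by (intro member_le_sum) auto
    moreover have "(cmod (f m0))^2 > 0" using m0 by simp
    ultimately show ?thesis by linarith
  qed
  have rat: "S2 f (Suc k) \<le> K * S2 f k" if "k \<ge> k0" for k
  proof -
    have p: "S2 f k > 0" using pos that by simp
    have "ratio k < real n" using r0 that by (simp add: k0_def)
    then have "sqrt (S2 f (Suc k)) / sqrt (S2 f k) < real n"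
      unfolding ratio_def Suc_eq_plus1 by (simp only: norm2_pow)
    then have "sqrt (S2 f (Suc k)) < real n * sqrt (S2 f k)" using p by (simp add: divide_less_eq)
    then have "(sqrt (S2 f (Suc k)))^2 \<le> (real n * sqrt (S2 f k))^2"
      by (intro power_mono) (auto simp: S2_nonneg)
    then have "S2 f (Suc k) \<le> (real n)^2 * S2 f k"
      using p S2_nonneg[of f "Suc k"] by (simp add: power_mult_distrib)
    also have "\<dots> \<le> K * S2 f k" using p by (intro mult_right_mono) (auto simp: K_def)
    finally show ?thesis .
  qed
  define P where "P = (\<lambda>j::nat. \<lambda>\<beta>. \<beta> \<in> {0..1} \<longrightarrow> (\<exists>C>0. \<forall>x\<ge>8.
     cmod (\<Sum>m\<in>{1..nat \<lfloor>x\<rfloor>}. f m * complex_of_real (Dm m \<beta>)) \<le> C * x powr (1/2 + 1/real (Suc j)) * Mf f x))"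
  have "AE \<beta> in lborel. P j \<beta>" for j
    unfolding P_def by (rule main_eps[OF _ Kp rat pos]) auto
  then have "AE \<beta> in lborel. \<forall>j. P j \<beta>" by (simp add: AE_all_countable)
  then obtain N where N: "{\<beta> \<in> space lborel. \<not> (\<forall>j. P j \<beta>)} \<subseteq> N" "emeasure lborel N = 0" "N \<in> sets lborel"
    by (rule AE_E)
  have Nn: "N \<in> null_sets lborel" using N by (simp add: null_sets_def)
  define Z where "Z = {\<alpha>::real \<in> {1<..}. 1/\<alpha> \<in> N}"
  define G where "G = {1<..} - Z"
  show ?thesis
  proof (intro exI[of _ G] conjI)
    show "G \<subseteq> {1<..}" unfolding G_def by auto
    have "{1<..} - G = Z" unfolding G_def Z_def by auto
    then show "{1<..} - G \<in> null_sets lborel" using null_transfer[OF Nn] unfolding Z_def by simp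
    show "\<forall>\<alpha>\<in>G. \<forall>\<epsilon>>0. \<exists>C>0. \<forall>x::real. x \<ge> 8 \<longrightarrow>
              cmod (S_beatty \<alpha> f x - S_full f x / complex_of_real \<alpha>) \<le> C * x powr (1/2 + \<epsilon>) * Mf f x"
    proof (intro ballI allI impI)
      fix \<alpha> \<epsilon> :: real assume aG: "\<alpha> \<in> G" and e: "\<epsilon> > 0"
      have a1: "\<alpha> > 1" and nN: "1/\<alpha> \<notin> N" using aG by (auto simp: G_def Z_def)
      have b01: "1/\<alpha> \<in> {0..1}" using a1 by auto
      have allP: "\<forall>j. P j (1/\<alpha>)" using N(1) nN by auto
      obtain j :: nat where j: "1 / real (Suc j) < \<epsilon>" using reals_Archimedean[OF e] by (auto simp: inverse_eq_divide)
      from allP[rule_format, of j] b01 obtain C where C: "C > 0" and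
        Cb: "\<And>x. x \<ge> 8 \<Longrightarrow> cmod (\<Sum>m\<in>{1..nat \<lfloor>x\<rfloor>}. f m * complex_of_real (Dm m (1/\<alpha>))) \<le> C * x powr (1/2 + 1/real (Suc j)) * Mf f x"
        unfolding P_def by auto
      show "\<exists>C>0. \<forall>x::real. x \<ge> 8 \<longrightarrow> cmod (S_beatty \<alpha> f x - S_full f x / complex_of_real \<alpha>) \<le> C * x powr (1/2 + \<epsilon>) * Mf f x"
      proof (intro exI[of _ C] conjI allI impI C)
        fix x :: real assume x8: "x \<ge> 8"
        have "cmod (S_beatty \<alpha> f x - S_full f x / complex_of_real \<alpha>)
            = cmod (\<Sum>m\<in>{1..nat \<lfloor>x\<rfloor>}. f m * complex_of_real (Dm m (1/\<alpha>)))"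
          by (simp add: S_identity[OF a1])
        also have "\<dots> \<le> C * x powr (1/2 + 1/real (Suc j)) * Mf f x" by (rule Cb[OF x8])
        also have "\<dots> \<le> C * x powr (1/2 + \<epsilon>) * Mf f x"
        proof -
          have "x powr (1/2 + 1/real (Suc j)) \<le> x powr (1/2 + \<epsilon>)"
            using x8 j by (intro powr_mono) auto
          moreover have "Mf f x \<ge> 1" using x8 by (intro Mf_ge1) simp
          ultimately show ?thesis using C by (intro mult_right_mono mult_left_mono) auto
        qed
        finally show "cmod (S_beatty \<alpha> f x - S_full f x / complex_of_real \<alpha>) \<le> C * x powr (1/2 + \<epsilon>) * Mf f x" .
      qed
    qed
  qed
qed

end
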